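(* Let $X$ be a Euclidean polyhedral space, $U\subset X$ open, and $f$ a piecewise affine function on $U$. (1) If $f$ is locally strongly concave, then $f$ is concave. (2) If $X$ has pure dimension and $U$ is balanced and $f$ is concave, then $f$ is weakly concave.
   Context: Polyhedral spaces. Let $X$ be a second countable topological space. A polyhedral structure $\Pi$ on $X$ is a locally finite covering of $X$ by distinct closed subsets $\sigma$ (the polyhedra of $\Pi$), each equipped with a finite-dimensional vector space $M_\sigma$ of continuous real functions on $\sigma$ such that, with $N_\sigma=\operatorname{Hom}(M_\sigma,\mathbb{R})$, the evaluation map $\phi_\sigma\colon\sigma\to N_\sigma$ is a homeomorphism onto a full-dimensional convex polyhedron of an affine hyperplane $H_\sigma\subset N_\sigma$ not containing $0$. Faces of $\sigma$ are the preimages under $\phi_\sigma$ of faces of $\phi_\sigma(\sigma)$ (the empty set is a face). One requires that every face of a polyhedron of $\Pi$ is a polyhedron of $\Pi$ whose function space consists of the restrictions of the functions in $M_\sigma$, and that any two polyhedra intersect in a common face. Via $\phi_\sigma$, each polyhedron inherits an affine structure, a dimension, faces, facets, and a relative interior. $\Pi'$ is a subdivision of $\Pi$ if every polyhedron of $\Pi'$ is contained in a polyhedron of $\Pi$ with affine inclusion; two structures are equivalent if they have a common subdivision. A polyhedral space is $X$ with an equivalence class of polyhedral structures; a polyhedral complex on $X$ is a member of this class. $X$ has pure dimension $n$ if all maximal polyhedra of a polyhedral complex on it have dimension $n$. We write $\tau\prec\sigma$ if $\tau$ is a face of $\sigma$. Euclidean polyhedral spaces. A Euclidean polyhedral space is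 a polyhedral space $X$ with a finite-dimensional real vector space $N_X$ with Euclidean inner product and a map $\iota\colon X\to N_X$ with image in an affine hyperplane $H_X$ not containing $0$, such that some polyhedral complex on $X$ has $\iota$ injective and affine on each polyhedron; only such complexes are called polyhedral complexes on $X$. For a nonempty facet $\tau$ of $\sigma\in\Pi$, $v_{\sigma\setminus\tau}$ is the unit vector orthogonal to the affine span of $\iota(\tau)$, parallel to that of $\iota(\sigma)$, pointing towards $\iota(\sigma)$. Weights, cycles, products. For $U$ open, $\Pi|_U$ is the set of polyhedra of $\Pi$ meeting $U$, $\Pi|_U(k)$ those of dimension $k$. A $k$-dimensional weight on $\Pi|_U$ is a map $c\colon\Pi|_U(k)\to\mathbb{R}$; it is positive if $c\ge0$, and a Minkowski weight if $\sum_{\sigma\in\Pi|_U(k),\sigma\succ\tau}c(\sigma)v_{\sigma\setminus\tau}=0$ for every $\tau\in\Pi|_U(k-1)$. A piecewise affine function on $U$ defined on $\Pi$ is $f\colon U\to\mathbb{R}$ with $f|_{\sigma\cap U}$ affine for every $\sigma\in\Pi|_U$; write $f=f_\sigma\circ\iota$ on $\sigma\cap U$ with $f_\sigma$ linear on $N_X$. $f$ is piecewise affine on $U$ if it is defined on some polyhedral complex. The product is $(f\cdot c)(\tau)=-\sum_{\sigma\in\Pi|_U(k),\sigma\succ\tau}c(\sigma)f_\sigma(v_{\sigma\setminus\tau})$. If $\Pi'$ subdivides $\Pi$, the pullback $c_{\Pi'}$ assigns to $\sigma'\in\Pi'|_U(k)$ the value $c(\sigma)$ if $\sigma'\subset\sigma\in\Pi|_U(k)$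 and $0$ otherwise. The group $Z_k(U)$ of $k$-dimensional Minkowski cycles is the direct limit of the Minkowski weights on $\Pi|_U$ over all polyhedral complexes under pullback; a cycle is positive if represented by a positive Minkowski weight; $f\cdot[c]=[f\cdot c]$. Concavity. A piecewise affine $f$ on $U$ is strongly concave if there is a function $f'\colon H_X\to\mathbb{R}\cup\{\pm\infty\}$ with convex hypograph $\{(y,z): z\le f'(y)\}$ such that $f=f'\circ\iota$ on $U$; locally strongly concave if there is an open cover $U=\bigcup U_i$ with each $f|_{U_i}$ strongly concave. $f$ is concave if for every open $V\subset U$ and every positive Minkowski cycle $\gamma$ on $V$, $f\cdot\gamma$ is positive. When $X$ has pure dimension $n$, a balancing condition on $U$ is an $n$-dimensional Minkowski cycle $\beta_U$ on $U$ represented by a Minkowski weight $b$ on some $\Pi|_U$ with $b(\sigma)>0$ for all $\sigma\in\Pi|_U(n)$; $U$ is then called balanced, and $f$ is weakly concave if $f\cdot\beta_U$ is positive. *)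

theory Defs
  imports "HOL-Analysis.Analysis" "HOL-Library.Extended_Real"
begin

text \<open>The space X is the type 'a (a second countable
topological space), N_X is the Euclidean space 'n, iota is the map X -> N_X and H is the
affine hyperplane H_X.  Since only polyhedral complexes on which iota is injective and affine
are considered, the affine structure (function space M_s) of a cell s is the pull-back
along iota; hence a cell is described just by the subset s of X.\<close>

definition is_face :: "('a \<Rightarrow> 'n::euclidean_space) \<Rightarrow> 'a set \<Rightarrow> 'a set \<Rightarrow> bool" where
  "is_face iota t s \<longleftrightarrow> t \<subseteq> s \<and> (iota ` t) face_of (iota ` s)"

definition cell_dim :: "('a \<Rightarrow> 'n::euclidean_space) \<Rightarrow> 'a set \<Rightarrow> int" where
  "cell_dim iota s = aff_dim (iota ` s)"

definition eucl_complex :: "('a::topological_space \<Rightarrow> 'n::euclidean_space) \<Rightarrow> 'a set set \<Rightarrow> bool" where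
  "eucl_complex iota P \<longleftrightarrow>
     \<Union>P = UNIV \<and>
     (\<forall>x. \<exists>W. open W \<and> x \<in> W \<and> finite {s\<in>P. s \<inter> W \<noteq> {}}) \<and>
     (\<forall>s\<in>P. closed s \<and> inj_on iota s \<and>
        (\<exists>g. homeomorphism s (iota ` s) iota g) \<and> polyhedron (iota ` s)) \<and>
     (\<forall>s\<in>P. \<forall>t. is_face iota t s \<and> t \<noteq> {} \<longrightarrow> t \<in> P) \<and>
     (\<forall>s\<in>P. \<forall>s'\<in>P. is_face iota (s \<inter> s') s \<and> is_face iota (s \<inter> s') s')"

text \<open>Subdivision (the inclusions are automatically affine, both being given by iota).\<close>
definition subdivides :: "'a set set \<Rightarrow> 'a set set \<Rightarrow> bool" where
  "subdivides P' P \<longleftrightarrow> (\<forall>s'\<in>P'. \<exists>s\<in>P. s' \<subseteq> s)"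

text \<open>Polyhedral complexes on X: Euclidean complexes equivalent to the reference complex P0.\<close>
definition complex_on :: "('a::topological_space \<Rightarrow> 'n::euclidean_space) \<Rightarrow> 'a set set \<Rightarrow> 'a set set \<Rightarrow> bool" where
  "complex_on iota P0 P \<longleftrightarrow> eucl_complex iota P \<and>
     (\<exists>P''. eucl_complex iota P'' \<and> subdivides P'' P \<and> subdivides P'' P0)"

definition eucl_poly_space :: "('a::second_countable_topology \<Rightarrow> 'n::euclidean_space) \<Rightarrow> 'n set \<Rightarrow> 'a set set \<Rightarrow> bool" where
  "eucl_poly_space iota H P0 \<longleftrightarrow> eucl_complex iota P0 \<and>
     (\<exists>a b. a \<noteq> 0 \<and> b \<noteq> 0 \<and> H = {y. a \<bullet> y = b}) \<and> range iota \<subseteq> H"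

definition restr :: "('a \<Rightarrow> 'n::euclidean_space) \<Rightarrow> 'a set set \<Rightarrow> 'a set \<Rightarrow> int \<Rightarrow> 'a set set" where
  "restr iota P U k = {s\<in>P. s \<inter> U \<noteq> {} \<and> cell_dim iota s = k}"

definition normal_vec :: "('a \<Rightarrow> 'n::euclidean_space) \<Rightarrow> 'a set \<Rightarrow> 'a set \<Rightarrow> 'n" where
  "normal_vec iota s t = (THE v. norm v = 1 \<and>
      v \<in> span {y - x | y x. y \<in> iota ` s \<and> x \<in> iota ` s} \<and>
      (\<forall>x\<in>iota ` t. \<forall>x'\<in>iota ` t. v \<bullet> (x - x') = 0) \<and>
      (\<exists>y\<in>iota ` s. \<exists>x\<in>iota ` t. v \<bullet> (y - x) > 0))"

definition minkowski :: "('a \<Rightarrow> 'n::euclidean_space) \<Rightarrow> 'a set set \<Rightarrow> 'a set \<Rightarrow> int \<Rightarrow> ('a set \<Rightarrow> real) \<Rightarrow> bool" where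
  "minkowski iota P U k c \<longleftrightarrow>
     (\<forall>t\<in>restr iota P U (k - 1).
        (\<Sum>s\<in>{s\<in>restr iota P U k. is_face iota t s}. c s *\<^sub>R normal_vec iota s t) = 0)"

definition positive_weight :: "('a \<Rightarrow> 'n::euclidean_space) \<Rightarrow> 'a set set \<Rightarrow> 'a set \<Rightarrow> int \<Rightarrow> ('a set \<Rightarrow> real) \<Rightarrow> bool" where
  "positive_weight iota P U k c \<longleftrightarrow> (\<forall>s\<in>restr iota P U k. c s \<ge> 0)"

definition pw_affine_on :: "('a \<Rightarrow> 'n::euclidean_space) \<Rightarrow> 'a set set \<Rightarrow> 'a set \<Rightarrow> ('a \<Rightarrow> real) \<Rightarrow> bool" where
  "pw_affine_on iota P U f \<longleftrightarrow>
     (\<forall>s\<in>P. s \<inter> U \<noteq> {} \<longrightarrow> (\<exists>l::'n \<Rightarrow> real. linear l \<and> (\<forall>x\<in>s \<inter> U. f x = l (iota x))))"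

definition piecewise_affine :: "('a::topological_space \<Rightarrow> 'n::euclidean_space) \<Rightarrow> 'a set set \<Rightarrow> 'a set \<Rightarrow> ('a \<Rightarrow> real) \<Rightarrow> bool" where
  "piecewise_affine iota P0 U f \<longleftrightarrow> (\<exists>P. complex_on iota P0 P \<and> pw_affine_on iota P U f)"

definition lin_part :: "('a \<Rightarrow> 'n::euclidean_space) \<Rightarrow> 'a set \<Rightarrow> ('a \<Rightarrow> real) \<Rightarrow> 'a set \<Rightarrow> 'n \<Rightarrow> real" where
  "lin_part iota U f s = (SOME l. linear l \<and> (\<forall>x\<in>s \<inter> U. f x = l (iota x)))"

definition mult_weight :: "('a \<Rightarrow> 'n::euclidean_space) \<Rightarrow> 'a set set \<Rightarrow> 'a set \<Rightarrow> int \<Rightarrow> ('a \<Rightarrow> real) \<Rightarrow> ('a set \<Rightarrow> real) \<Rightarrow> 'a set \<Rightarrow> real" where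
  "mult_weight iota P U k f c t =
     - (\<Sum>s\<in>{s\<in>restr iota P U k. is_face iota t s}.
          c s * lin_part iota U f s (normal_vec iota s t))"

definition pullback :: "('a \<Rightarrow> 'n::euclidean_space) \<Rightarrow> 'a set set \<Rightarrow> 'a set \<Rightarrow> int \<Rightarrow> ('a set \<Rightarrow> real) \<Rightarrow> 'a set \<Rightarrow> real" where
  "pullback iota P U k c s' =
     (if \<exists>s\<in>restr iota P U k. s' \<subseteq> s
      then c (THE s. s \<in> restr iota P U k \<and> s' \<subseteq> s) else 0)"

text \<open>Equality in the direct limit Z_k(U): (P1,c1) and (P2,c2) represent the same cycle.\<close>
definition same_cycle :: "('a::topological_space \<Rightarrow> 'n::euclidean_space) \<Rightarrow> 'a set set \<Rightarrow> 'a set \<Rightarrow> int \<Rightarrow>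
    'a set set \<Rightarrow> ('a set \<Rightarrow> real) \<Rightarrow> 'a set set \<Rightarrow> ('a set \<Rightarrow> real) \<Rightarrow> bool" where
  "same_cycle iota P0 U k P1 c1 P2 c2 \<longleftrightarrow>
     (\<exists>P3. complex_on iota P0 P3 \<and> subdivides P3 P1 \<and> subdivides P3 P2 \<and>
        (\<forall>s\<in>restr iota P3 U k. pullback iota P1 U k c1 s = pullback iota P2 U k c2 s))"

definition positive_cycle :: "('a::topological_space \<Rightarrow> 'n::euclidean_space) \<Rightarrow> 'a set set \<Rightarrow> 'a set \<Rightarrow> int \<Rightarrow>
    'a set set \<Rightarrow> ('a set \<Rightarrow> real) \<Rightarrow> bool" where
  "positive_cycle iota P0 U k P c \<longleftrightarrow>
     (\<exists>P' c'. complex_on iota P0 P' \<and> minkowski iota P' U k c' \<and> positive_weight iota P' U k c' \<and>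
        same_cycle iota P0 U k P c P' c')"

text \<open>f . gamma is positive, where gamma = [(P,c)] is a k-dimensional Minkowski cycle on V;
  f . gamma = [f . c'] for any representative (P',c') of gamma on which f is defined.\<close>
definition product_positive :: "('a::topological_space \<Rightarrow> 'n::euclidean_space) \<Rightarrow> 'a set set \<Rightarrow> 'a set \<Rightarrow> int \<Rightarrow>
    ('a \<Rightarrow> real) \<Rightarrow> 'a set set \<Rightarrow> ('a set \<Rightarrow> real) \<Rightarrow> bool" where
  "product_positive iota P0 V k f P c \<longleftrightarrow>
     (\<forall>P' c'. complex_on iota P0 P' \<and> pw_affine_on iota P' V f \<and> minkowski iota P' V k c' \<and>
        same_cycle iota P0 V k P c P' c'
        \<longrightarrow> positive_cycle iota P0 V (k - 1) P' (mult_weight iota P' V k f c'))"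

definition concave_pa :: "('a::topological_space \<Rightarrow> 'n::euclidean_space) \<Rightarrow> 'a set set \<Rightarrow> 'a set \<Rightarrow> ('a \<Rightarrow> real) \<Rightarrow> bool" where
  "concave_pa iota P0 U f \<longleftrightarrow>
     (\<forall>V (k::nat) P c. open V \<and> V \<subseteq> U \<and> complex_on iota P0 P \<and> minkowski iota P V (int k) c \<and>
        positive_weight iota P V (int k) c \<longrightarrow> product_positive iota P0 V (int k) f P c)"

definition strongly_concave :: "('a \<Rightarrow> 'n::euclidean_space) \<Rightarrow> 'n set \<Rightarrow> 'a set \<Rightarrow> ('a \<Rightarrow> real) \<Rightarrow> bool" where
  "strongly_concave iota H U f \<longleftrightarrow>
     (\<exists>f'::'n \<Rightarrow> ereal. convex {(y, z::real). y \<in> H \<and> ereal z \<le> f' y} \<and>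
        (\<forall>x\<in>U. ereal (f x) = f' (iota x)))"

definition locally_strongly_concave :: "('a::topological_space \<Rightarrow> 'n::euclidean_space) \<Rightarrow> 'n set \<Rightarrow> 'a set \<Rightarrow> ('a \<Rightarrow> real) \<Rightarrow> bool" where
  "locally_strongly_concave iota H U f \<longleftrightarrow>
     (\<exists>\<U>. (\<forall>W\<in>\<U>. open W \<and> strongly_concave iota H W f) \<and> \<Union>\<U> = U)"

definition pure_dim :: "('a \<Rightarrow> 'n::euclidean_space) \<Rightarrow> 'a set set \<Rightarrow> nat \<Rightarrow> bool" where
  "pure_dim iota P0 n \<longleftrightarrow>
     (\<forall>s\<in>P0. s \<noteq> {} \<and> (\<forall>s'\<in>P0. s \<subseteq> s' \<longrightarrow> s' = s) \<longrightarrow>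
        cell_dim iota s = int n)"

definition balancing :: "('a::topological_space \<Rightarrow> 'n::euclidean_space) \<Rightarrow> 'a set set \<Rightarrow> 'a set \<Rightarrow> nat \<Rightarrow>
    'a set set \<Rightarrow> ('a set \<Rightarrow> real) \<Rightarrow> bool" where
  "balancing iota P0 U n P b \<longleftrightarrow> complex_on iota P0 P \<and> minkowski iota P U (int n) b \<and>
     (\<forall>s\<in>restr iota P U (int n). b s > 0)"

definition weakly_concave :: "('a::topological_space \<Rightarrow> 'n::euclidean_space) \<Rightarrow> 'a set set \<Rightarrow> 'a set \<Rightarrow> nat \<Rightarrow>
    'a set set \<Rightarrow> ('a set \<Rightarrow> real) \<Rightarrow> ('a \<Rightarrow> real) \<Rightarrow> bool" where
  "weakly_concave iota P0 U n P b f \<longleftrightarrow> product_positive iota P0 U (int n) f P b"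

end

theory Submission
  imports Defs
begin


definition dirS :: "'n::euclidean_space set \<Rightarrow> 'n set" where
  "dirS S = span {y - x | y x. y \<in> S \<and> x \<in> S}"

lemma subspace_dirS [simp]: "subspace (dirS S)"
  by (simp add: dirS_def)

lemma dirS_mono: "S \<subseteq> T \<Longrightarrow> dirS S \<subseteq> dirS T"
  unfolding dirS_def by (rule span_mono) blast

lemma diff_in_dirS: "y \<in> S \<Longrightarrow> x \<in> S \<Longrightarrow> y - x \<in> dirS S"
  unfolding dirS_def by (rule span_base) blast

lemma dirS_eq:
  assumes "x0 \<in> S"
  shows "dirS S = span ((\<lambda>y. y - x0) ` S)"
proof
  show "dirS S \<subseteq> span ((\<lambda>y. y - x0) ` S)"
    unfolding dirS_def
  proof (rule span_minimal)
    show "{y - x |y x. y \<in> S \<and> x \<in> S} \<subseteq> span ((\<lambda>y. y - x0) ` S)"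
    proof
      fix z assume "z \<in> {y - x |y x. y \<in> S \<and> x \<in> S}"
      then obtain y x where z: "z = (y - x0) - (x - x0)" "y \<in> S" "x \<in> S" by auto
      then show "z \<in> span ((\<lambda>y. y - x0) ` S)"
        by (metis image_eqI span_base span_diff)
    qed
  qed simp
  show "span ((\<lambda>y. y - x0) ` S) \<subseteq> dirS S"
    by (rule span_minimal) (auto intro: diff_in_dirS assms)
qed

lemma aff_dim_dirS:
  fixes S :: "'n::euclidean_space set"
  assumes "x0 \<in> S"
  shows "aff_dim S = int (dim (dirS S))"
  using aff_dim_eq_dim_subtract[of x0 S] assms dirS_eq[OF assms]
  by (simp add: hull_inc)

lemma affine_hull_dirS:
  fixes S :: "'n::euclidean_space set"
  assumes "x0 \<in> S"
  shows "affine hull S = {y. y - x0 \<in> dirS S}"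
proof -
  have "affine hull S = (\<lambda>x. x0 + x) ` span ((\<lambda>x. -x0 + x) ` S)"
    using affine_hull_span_gen[of x0 S] assms by (simp add: hull_inc)
  also have "(\<lambda>x. -x0 + x) ` S = (\<lambda>y. y - x0) ` S" by auto
  finally show ?thesis using dirS_eq[OF assms]
    by (auto simp: image_iff) (metis add.commute diff_add_cancel)
qed

lemma hyper_in_subspace:
  fixes A B :: "'n::euclidean_space set"
  assumes "subspace A" "subspace B" "A \<subseteq> B" "dim B \<le> dim A + 1"
    and "v \<in> B" "v \<noteq> 0" "\<And>w. w \<in> A \<Longrightarrow> v \<bullet> w = 0"
  shows "A = {w \<in> B. v \<bullet> w = 0}"
proof -
  let ?C = "{w \<in> B. v \<bullet> w = 0}"
  have sC: "subspace ?C"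
    using assms(2) unfolding subspace_def by (auto simp: inner_add_right)
  have AC: "A \<subseteq> ?C" using assms by auto
  have "v \<notin> ?C" using assms(6) by simp
  then have "?C \<subset> B" using assms(5) by blast
  then have "span ?C \<subset> span B" using sC assms(2) by (metis span_eq_iff)
  then have "dim ?C < dim B" by (rule dim_psubset)
  then have "dim ?C \<le> dim A" using assms(4) by linarith
  then show ?thesis using subspace_dim_equal[OF assms(1) sC AC] by simp
qed


lemma orth_span:
  assumes "\<And>w. w \<in> G \<Longrightarrow> v \<bullet> w = 0" "w \<in> span G"
  shows "v \<bullet> w = (0::real)"
proof -
  have "span G \<subseteq> {w. v \<bullet> w = 0}"
    by (rule span_minimal) (auto simp: assms(1) subspace_def inner_add_right)
  then show ?thesis using assms(2) by blast
qed

definition gnormal :: "'n::euclidean_space set \<Rightarrow> 'n set \<Rightarrow> 'n" where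
  "gnormal A B = (THE v. norm v = 1 \<and>
      v \<in> span {y - x | y x. y \<in> A \<and> x \<in> A} \<and>
      (\<forall>x\<in>B. \<forall>x'\<in>B. v \<bullet> (x - x') = 0) \<and>
      (\<exists>y\<in>A. \<exists>x\<in>B. v \<bullet> (y - x) > 0))"

lemma normal_vec_gnormal: "normal_vec iota s t = gnormal (iota ` s) (iota ` t)"
  unfolding normal_vec_def gnormal_def by simp

lemma side_lemma:
  fixes A B :: "'n::euclidean_space set"
  assumes "convex A" "B face_of A" "x0 \<in> B" "u \<in> dirS A"
    and hyp: "\<And>w. w \<in> dirS A \<Longrightarrow> u \<bullet> w = 0 \<Longrightarrow> w \<in> dirS B"
    and orth: "\<And>w. w \<in> dirS B \<Longrightarrow> u \<bullet> w = 0"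
    and y1: "y1 \<in> A" "u \<bullet> (y1 - x0) < 0" and y2: "y2 \<in> A" "u \<bullet> (y2 - x0) > 0"
  shows False
proof -
  define a where "a = u \<bullet> (y1 - x0)"
  define b where "b = u \<bullet> (y2 - x0)"
  have ab: "a < 0" "b > 0" using y1 y2 a_def b_def by auto
  define t where "t = b / (b - a)"
  have t: "0 < t" "t < 1" using ab by (auto simp: t_def field_simps)
  define z where "z = (1 - t) *\<^sub>R y2 + t *\<^sub>R y1"
  have zA: "z \<in> A" using convexD[OF assms(1) y2(1) y1(1), of "1-t" t] t by (simp add: z_def)
  have "z - x0 = (1 - t) *\<^sub>R (y2 - x0) + t *\<^sub>R (y1 - x0)"
    by (simp add: z_def algebra_simps)
  then have "u \<bullet> (z - x0) = (1 - t) * b + t * a"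
    by (simp add: inner_add_right a_def b_def)
  also have "\<dots> = 0" using ab by (simp add: t_def field_simps)
  finally have "u \<bullet> (z - x0) = 0" .
  moreover have "x0 \<in> A" using assms(2,3) face_of_imp_subset by blast
  ultimately have "z - x0 \<in> dirS B" using hyp diff_in_dirS zA by blast
  then have "z \<in> affine hull B" using affine_hull_dirS[OF assms(3)] by simp
  then have zB: "z \<in> B" using face_of_imp_eq_affine_Int[OF assms(1,2)] zA by blast
  have "y1 \<noteq> y2" using ab a_def b_def by auto
  then have "z \<in> open_segment y2 y1" using t unfolding z_def in_segment(2)
    by auto
  then have "y1 \<in> B" using face_ofD[OF assms(2) _ y2(1) y1(1) zB] by blast
  then have "y1 - x0 \<in> dirS B" using diff_in_dirS assms(3) by blast
  then have "u \<bullet> (y1 - x0) = 0" using orth by blast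
  then show False using y1 by simp
qed


lemma gnormal_props:
  fixes A B :: "'n::euclidean_space set"
  assumes cA: "convex A" and fB: "B face_of A" and ne: "B \<noteq> {}" and dimAB: "aff_dim A = aff_dim B + 1"
  shows "norm (gnormal A B) = 1" "gnormal A B \<in> dirS A"
    "\<And>w. w \<in> dirS B \<Longrightarrow> gnormal A B \<bullet> w = 0"
    "\<And>y x. y \<in> A \<Longrightarrow> x \<in> B \<Longrightarrow> gnormal A B \<bullet> (y - x) \<ge> 0"
    "\<exists>y\<in>A. \<exists>x\<in>B. gnormal A B \<bullet> (y - x) > 0"
    "dirS B = {w \<in> dirS A. gnormal A B \<bullet> w = 0}"
proof -
  obtain x0 where x0: "x0 \<in> B" using ne by blast
  have BA: "B \<subseteq> A" using fB face_of_imp_subset by blast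
  then have x0A: "x0 \<in> A" using x0 by blast
  have dims: "dim (dirS A) = dim (dirS B) + 1"
    using dimAB aff_dim_dirS[OF x0] aff_dim_dirS[OF x0A] by simp
  have sub: "dirS B \<subseteq> dirS A" using dirS_mono[OF BA] .
  have spB: "span (dirS B) = dirS B" and spA: "span (dirS A) = dirS A"
    by (simp_all add: span_eq_iff)
  have "dirS B \<noteq> dirS A"
  proof
    assume "dirS B = dirS A" then show False using dims by simp
  qed
  then have "span (dirS B) \<subset> span (dirS A)"
    unfolding spA spB using sub by (simp add: psubset_eq)
  then obtain v0 where v0: "v0 \<noteq> 0" "v0 \<in> span (dirS A)" "\<And>y. y \<in> span (dirS B) \<Longrightarrow> orthogonal v0 y"
    using orthogonal_to_subspace_exists_gen[OF \<open>span (dirS B) \<subset> span (dirS A)\<close>] by blast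
  define v1 where "v1 = v0 /\<^sub>R norm v0"
  have v1: "norm v1 = 1" "v1 \<in> dirS A" "\<And>w. w \<in> dirS B \<Longrightarrow> v1 \<bullet> w = 0"
  proof -
    have "v0 \<in> dirS A" using v0(2) by (metis span_eq_iff subspace_dirS)
    then show "v1 \<in> dirS A" unfolding v1_def
      using subspace_dirS subspace_scale by blast
    show "norm v1 = 1" using v0(1) by (simp add: v1_def)
    show "\<And>w. w \<in> dirS B \<Longrightarrow> v1 \<bullet> w = 0"
      using v0(3) by (simp add: v1_def orthogonal_def span_base)
  qed
  have hyp1: "dirS B = {w \<in> dirS A. v1 \<bullet> w = 0}"
  proof (rule hyper_in_subspace)
    show "dim (dirS A) \<le> dim (dirS B) + 1" using dims by simp
    show "v1 \<noteq> 0" using v1(1) by auto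
  qed (use v1 sub in auto)
  have ex: "\<exists>y\<in>A. v1 \<bullet> (y - x0) \<noteq> 0"
  proof (rule ccontr)
    assume "\<not> ?thesis"
    then have "\<forall>y\<in>A. y - x0 \<in> dirS B" using hyp1 diff_in_dirS x0A by auto
    then have "A \<subseteq> affine hull B" using affine_hull_dirS[OF x0] by auto
    then have "aff_dim A \<le> aff_dim B" by (metis aff_dim_affine_hull aff_dim_subset)
    then show False using dimAB by simp
  qed
  have v1n: "norm (-v1) = 1" "-v1 \<in> dirS A" "\<And>w. w \<in> dirS B \<Longrightarrow> (-v1) \<bullet> w = 0"
    using v1(1) apply simp
    using v1(2) subspace_neg subspace_dirS apply blast
    using v1(3) by simp
  have hyp1n: "\<And>w. w \<in> dirS A \<Longrightarrow> (-v1) \<bullet> w = 0 \<Longrightarrow> w \<in> dirS B" using hyp1 by auto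
  obtain v2 where v2: "norm v2 = 1" "v2 \<in> dirS A" "\<And>w. w \<in> dirS B \<Longrightarrow> v2 \<bullet> w = 0"
    "\<And>w. w \<in> dirS A \<Longrightarrow> v2 \<bullet> w = 0 \<Longrightarrow> w \<in> dirS B"
    "\<And>y. y \<in> A \<Longrightarrow> v2 \<bullet> (y - x0) \<ge> 0" "\<exists>y\<in>A. v2 \<bullet> (y - x0) > 0"
  proof (cases "\<exists>y\<in>A. v1 \<bullet> (y - x0) > 0")
    case True
    have "\<And>y. y \<in> A \<Longrightarrow> v1 \<bullet> (y - x0) \<ge> 0"
    proof (rule ccontr)
      fix y assume "y \<in> A" "\<not> v1 \<bullet> (y - x0) \<ge> 0"
      have h: "\<And>w. w \<in> dirS A \<Longrightarrow> v1 \<bullet> w = 0 \<Longrightarrow> w \<in> dirS B" using hyp1 by blast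
      obtain y' where "y' \<in> A" "v1 \<bullet> (y' - x0) > 0" using True by blast
      then show False using side_lemma[OF cA fB x0 v1(2) h v1(3), of y y'] \<open>y \<in> A\<close> \<open>\<not> v1 \<bullet> (y - x0) \<ge> 0\<close>
        by linarith
    qed
    moreover have "\<And>w. w \<in> dirS A \<Longrightarrow> v1 \<bullet> w = 0 \<Longrightarrow> w \<in> dirS B" using hyp1 by blast
    ultimately show ?thesis using that[of v1] v1 True by blast
  next
    case False
    then obtain y where "y \<in> A" "v1 \<bullet> (y - x0) < 0" using ex by force
    then have T: "\<exists>y\<in>A. (-v1) \<bullet> (y - x0) > 0" by auto
    have "\<And>y. y \<in> A \<Longrightarrow> (-v1) \<bullet> (y - x0) \<ge> 0"
    proof (rule ccontr)
      fix y assume "y \<in> A" "\<not> (-v1) \<bullet> (y - x0) \<ge> 0"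
      obtain y' where "y' \<in> A" "(-v1) \<bullet> (y' - x0) > 0" using T by blast
      then show False using side_lemma[OF cA fB x0 v1n(2) hyp1n v1n(3), of y y'] \<open>y \<in> A\<close> \<open>\<not> (-v1) \<bullet> (y - x0) \<ge> 0\<close>
        by linarith
    qed
    then show ?thesis using that[of "-v1", OF v1n(1,2,3) hyp1n] T by blast
  qed
  have v2x: "v2 \<bullet> (y - x) = v2 \<bullet> (y - x0)" if "x \<in> B" for x y
  proof -
    have "v2 \<bullet> (x - x0) = 0" using v2(3) diff_in_dirS that x0 by blast
    then show ?thesis by (simp add: inner_diff_right)
  qed
  let ?P = "\<lambda>v. norm v = 1 \<and>
      v \<in> span {y - x | y x. y \<in> A \<and> x \<in> A} \<and>
      (\<forall>x\<in>B. \<forall>x'\<in>B. v \<bullet> (x - x') = 0) \<and>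
      (\<exists>y\<in>A. \<exists>x\<in>B. v \<bullet> (y - x) > 0)"
  have Pv2: "?P v2"
  proof (intro conjI)
    show "norm v2 = 1" by (rule v2(1))
    show "v2 \<in> span {y - x |y x. y \<in> A \<and> x \<in> A}" using v2(2) by (simp add: dirS_def)
    show "\<forall>x\<in>B. \<forall>x'\<in>B. v2 \<bullet> (x - x') = 0" using v2(3) diff_in_dirS by blast
    show "\<exists>y\<in>A. \<exists>x\<in>B. v2 \<bullet> (y - x) > 0" using v2(6) x0 by blast
  qed
  have uniq: "v = v2" if Pv: "?P v" for v
  proof -
    have vA: "v \<in> dirS A" using Pv by (simp add: dirS_def)
    have vB: "v \<bullet> w = 0" if "w \<in> dirS B" for w
      using orth_span[of "{y - x | y x. y \<in> B \<and> x \<in> B}" v w] Pv that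
      by (auto simp: dirS_def)
    define r where "r = v - (v \<bullet> v2) *\<^sub>R v2"
    have "r \<in> dirS A" using vA v2(2) by (simp add: r_def subspace_diff subspace_scale)
    moreover have "v2 \<bullet> r = 0" using v2(1) by (simp add: r_def inner_diff_right norm_eq_1 inner_commute)
    ultimately have "r \<in> dirS B" using v2(4) by blast
    then have "v \<bullet> r = 0" "v2 \<bullet> r = 0" using vB v2(3) by auto
    then have "r \<bullet> r = 0" by (simp add: r_def inner_diff_left)
    then have r0: "r = 0" by simp
    then have vv: "v = (v \<bullet> v2) *\<^sub>R v2" by (simp add: r_def)
    then have "norm v = \<bar>v \<bullet> v2\<bar> * norm v2" by (metis norm_scaleR)
    then have "\<bar>v \<bullet> v2\<bar> = 1" using Pv v2(1) by simp
    moreover obtain y x where yx: "y \<in> A" "x \<in> B" "v \<bullet> (y - x) > 0" using Pv by blast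
    then have "(v \<bullet> v2) * (v2 \<bullet> (y - x)) > 0" using vv
      by (metis inner_scaleR_left)
    moreover have "v2 \<bullet> (y - x) \<ge> 0" using v2(5) yx v2x by simp
    ultimately have "v \<bullet> v2 = 1"
      by (metis abs_of_nonneg abs_of_nonpos linorder_not_le mult_nonpos_nonneg not_less_iff_gr_or_eq)
    then show ?thesis using vv by simp
  qed
  have G: "gnormal A B = v2"
    unfolding gnormal_def using Pv2 uniq by (rule the_equality)
  show "norm (gnormal A B) = 1" "gnormal A B \<in> dirS A"
    "\<And>w. w \<in> dirS B \<Longrightarrow> gnormal A B \<bullet> w = 0"
    using G v2 by auto
  show "\<And>y x. y \<in> A \<Longrightarrow> x \<in> B \<Longrightarrow> gnormal A B \<bullet> (y - x) \<ge> 0"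
    using G v2(5) v2x by simp
  show "\<exists>y\<in>A. \<exists>x\<in>B. gnormal A B \<bullet> (y - x) > 0"
    using G v2(6) x0 by blast
  show "dirS B = {w \<in> dirS A. gnormal A B \<bullet> w = 0}"
    using G v2 sub by auto
qed


lemma facet_eq_hyper:
  fixes A B :: "'n::euclidean_space set"
  assumes cA: "convex A" and fB: "B face_of A" and ne: "B \<noteq> {}" and dimAB: "aff_dim A = aff_dim B + 1"
    and x0: "x0 \<in> B"
  shows "B = {y \<in> A. gnormal A B \<bullet> (y - x0) = 0}"
proof
  show "B \<subseteq> {y \<in> A. gnormal A B \<bullet> (y - x0) = 0}"
    using gnormal_props(3)[OF assms(1-4)] diff_in_dirS x0 face_of_imp_subset[OF fB] by blast
  show "{y \<in> A. gnormal A B \<bullet> (y - x0) = 0} \<subseteq> B"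
  proof clarify
    fix y assume y: "y \<in> A" "gnormal A B \<bullet> (y - x0) = 0"
    have "x0 \<in> A" using x0 face_of_imp_subset[OF fB] by blast
    then have "y - x0 \<in> dirS A" using diff_in_dirS y(1) by blast
    then have "y - x0 \<in> dirS B" using gnormal_props(6)[OF assms(1-4)] y(2) by blast
    then have "y \<in> affine hull B" using affine_hull_dirS[OF x0] by simp
    then show "y \<in> B" using face_of_imp_eq_affine_Int[OF cA fB] y(1) by blast
  qed
qed

lemma push_in:
  fixes A B :: "'n::euclidean_space set"
  assumes cA: "convex A" and fB: "B face_of A" and ne: "B \<noteq> {}" and dimAB: "aff_dim A = aff_dim B + 1"
    and p: "p \<in> rel_interior B"
  shows "\<exists>\<delta>>0. \<forall>t. 0 \<le> t \<and> t \<le> \<delta> \<longrightarrow> p + t *\<^sub>R gnormal A B \<in> A"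
proof -
  define n where "n = gnormal A B"
  note G = gnormal_props[OF assms(1-4), folded n_def]
  have pB: "p \<in> B" using p rel_interior_subset by blast
  have BA: "B \<subseteq> A" using fB face_of_imp_subset by blast
  have "A \<noteq> B" using dimAB by auto
  have "A \<noteq> {}" using ne BA by blast
  then obtain q where q: "q \<in> rel_interior A" using cA rel_interior_eq_empty by blast
  have qA: "q \<in> A" using q rel_interior_subset by blast
  define \<alpha> where "\<alpha> = n \<bullet> (q - p)"
  have "\<alpha> \<ge> 0" using G(4) qA pB by (simp add: \<alpha>_def)
  moreover have "\<alpha> \<noteq> 0"
  proof
    assume "\<alpha> = 0"
    then have "q \<in> {y \<in> A. gnormal A B \<bullet> (y - p) = 0}" using qA by (simp add: \<alpha>_def n_def)
    then have "q \<in> B" using facet_eq_hyper[OF assms(1-4) pB] by blast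
    then show False using face_of_disjoint_rel_interior[OF fB] \<open>A \<noteq> B\<close> q by blast
  qed
  ultimately have a0: "\<alpha> > 0" by simp
  define d where "d = (q - p) - \<alpha> *\<^sub>R n"
  have "q - p \<in> dirS A" using diff_in_dirS qA pB BA by blast
  then have "d \<in> dirS A" using G(2) by (simp add: d_def subspace_diff subspace_scale)
  moreover have "n \<bullet> d = 0" using G(1) by (simp add: d_def \<alpha>_def inner_diff_right norm_eq_1)
  ultimately have dB: "d \<in> dirS B" using G(6) by blast
  obtain e where e: "e > 0" "ball p e \<inter> affine hull B \<subseteq> B"
    using p by (auto simp: mem_rel_interior_ball)
  define K where "K = norm d + 1"
  have K0: "K > 0" by (simp add: K_def add_nonneg_pos)
  define \<delta> where "\<delta> = \<alpha> * min (1/2) (e / (2 * K))"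
  have "e / (2 * K) > 0" using e(1) K0 by simp
  then have \<delta>0: "\<delta> > 0" using a0 unfolding \<delta>_def by simp
  have "p + t *\<^sub>R n \<in> A" if t: "0 \<le> t" "t \<le> \<delta>" for t
  proof (cases "t = 0")
    case True then show ?thesis using pB BA by auto
  next
    case False
    define lam where "lam = t / \<alpha>"
    have l0: "lam > 0" using False t a0 by (simp add: lam_def)
    have lmin: "lam \<le> min (1/2) (e / (2 * K))"
    proof -
      have "t \<le> min (1/2) (e / (2 * K)) * \<alpha>" using t(2) by (simp add: \<delta>_def mult.commute)
      then show ?thesis unfolding lam_def using a0 by (simp only: pos_divide_le_eq)
    qed
    define \<mu> where "\<mu> = lam / (1 - lam)"
    have l1: "lam \<le> 1/2" using lmin by simp
    have mu0: "\<mu> \<ge> 0" using l0 l1 by (simp add: \<mu>_def)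
    have "\<mu> \<le> 2 * lam" using l0 l1 by (simp add: \<mu>_def field_simps)
    also have "\<dots> \<le> 2 * (e / (2 * K))" using lmin by simp
    also have "\<dots> = e / K" using K0 by simp
    finally have mK: "\<mu> \<le> e / K" .
    have "\<mu> * norm d \<le> e / K * norm d" using mult_right_mono[OF mK norm_ge_zero] .
    also have "\<dots> < e" using e(1) K0 by (simp add: K_def field_simps)
    finally have "\<mu> * norm d < e" .
    then have "p - \<mu> *\<^sub>R d \<in> ball p e" by (simp add: dist_norm mu0)
    moreover have "p - \<mu> *\<^sub>R d \<in> affine hull B"
      using affine_hull_dirS[OF pB] dB by (simp add: subspace_neg subspace_scale)
    ultimately have pd: "p - \<mu> *\<^sub>R d \<in> A" using e(2) BA by blast
    have "(1 - lam) *\<^sub>R (p - \<mu> *\<^sub>R d) + lam *\<^sub>R q \<in> A"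
      using convexD[OF cA pd qA, of "1 - lam" lam] l0 l1 by simp
    moreover have "(1 - lam) *\<^sub>R (p - \<mu> *\<^sub>R d) + lam *\<^sub>R q = p + t *\<^sub>R n"
    proof -
      have "(1 - lam) * \<mu> = lam" using l1 by (simp add: \<mu>_def)
      have "(1 - lam) *\<^sub>R (p - \<mu> *\<^sub>R d) + lam *\<^sub>R q = (1 - lam) *\<^sub>R p - ((1 - lam) * \<mu>) *\<^sub>R d + lam *\<^sub>R q"
        by (simp add: algebra_simps)
      also have "\<dots> = (1 - lam) *\<^sub>R p - lam *\<^sub>R d + lam *\<^sub>R q" using \<open>(1 - lam) * \<mu> = lam\<close> by simp
      also have "\<dots> = p + lam *\<^sub>R ((q - p) - d)" by (simp add: algebra_simps)
      finally have "(1 - lam) *\<^sub>R (p - \<mu> *\<^sub>R d) + lam *\<^sub>R q = p + lam *\<^sub>R ((q - p) - d)" .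
      also have "(q - p) - d = \<alpha> *\<^sub>R n" by (simp add: d_def)
      also have "p + lam *\<^sub>R (\<alpha> *\<^sub>R n) = p + t *\<^sub>R n" using a0 by (simp add: lam_def)
      finally show ?thesis .
    qed
    ultimately show ?thesis by simp
  qed
  then show ?thesis using \<delta>0 unfolding n_def by blast
qed

lemma two_d_between:
  fixes X Y :: real
  defines "s \<equiv> \<lambda>a b. a * X + b * Y" and "t \<equiv> \<lambda>a b. b * X - a * Y"
  assumes XY: "X\<^sup>2 + Y\<^sup>2 > 0"
    and si: "s ai bi > 0" and sm: "s am bm > 0" and sj: "s aj bj > 0"
    and lt: "t ai bi / s ai bi < t am bm / s am bm" "t am bm / s am bm < t aj bj / s aj bj"
  shows "\<exists>l m. l > 0 \<and> m > 0 \<and> am = l * ai + m * aj \<and> bm = l * bi + m * bj"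
proof -
  define Si Sm Sj Ti Tm Tj where "Si = s ai bi" "Sm = s am bm" "Sj = s aj bj"
     "Ti = t ai bi" "Tm = t am bm" "Tj = t aj bj"
  have p: "Si > 0" "Sm > 0" "Sj > 0" using si sm sj by (simp_all add: Si_Sm_Sj_Ti_Tm_Tj_def)
  have c1: "Ti * Sm < Tm * Si" using lt(1) p by (simp add: Si_Sm_Sj_Ti_Tm_Tj_def divide_less_eq less_divide_eq field_simps)
  have c2: "Tm * Sj < Tj * Sm" using lt(2) p by (simp add: Si_Sm_Sj_Ti_Tm_Tj_def divide_less_eq less_divide_eq field_simps)
  define D where "D = Si * Tj - Ti * Sj"
  have "D * Sm = Si * (Tj * Sm - Tm * Sj) + Sj * (Tm * Si - Ti * Sm)" by (simp add: D_def algebra_simps)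
  also have "\<dots> > 0" using c1 c2 p by (simp add: add_pos_pos)
  finally have D0: "D > 0" using p by (simp add: zero_less_mult_iff)
  define l where "l = (Sm * Tj - Tm * Sj) / D"
  define m where "m = (Si * Tm - Ti * Sm) / D"
  have l0: "l > 0" using c2 D0 by (simp add: l_def algebra_simps)
  have m0: "m > 0" using c1 D0 by (simp add: m_def algebra_simps)
  have lD: "l * D = Sm * Tj - Tm * Sj" using D0 by (simp add: l_def)
  have mD: "m * D = Si * Tm - Ti * Sm" using D0 by (simp add: m_def)
  have "(l * Si + m * Sj) * D = Si * (l * D) + Sj * (m * D)" by (simp add: algebra_simps)
  also have "\<dots> = Si * (Sm * Tj - Tm * Sj) + Sj * (Si * Tm - Ti * Sm)" by (simp add: lD mD)
  also have "\<dots> = Sm * D" by (simp add: D_def algebra_simps)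
  finally have "(l * Si + m * Sj) * D = Sm * D" .
  then have eS: "Sm = l * Si + m * Sj" using D0 by simp
  have "(l * Ti + m * Tj) * D = Ti * (l * D) + Tj * (m * D)" by (simp add: algebra_simps)
  also have "\<dots> = Ti * (Sm * Tj - Tm * Sj) + Tj * (Si * Tm - Ti * Sm)" by (simp add: lD mD)
  also have "\<dots> = Tm * D" by (simp add: D_def algebra_simps)
  finally have "(l * Ti + m * Tj) * D = Tm * D" .
  then have eT: "Tm = l * Ti + m * Tj" using D0 by simp
  have "am * (X\<^sup>2 + Y\<^sup>2) = Sm * X - Tm * Y"
    by (simp add: Si_Sm_Sj_Ti_Tm_Tj_def s_def t_def power2_eq_square algebra_simps)
  also have "\<dots> = l * (Si * X - Ti * Y) + m * (Sj * X - Tj * Y)" by (simp add: eS eT algebra_simps)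
  also have "\<dots> = (l * ai + m * aj) * (X\<^sup>2 + Y\<^sup>2)"
    by (simp add: Si_Sm_Sj_Ti_Tm_Tj_def s_def t_def power2_eq_square algebra_simps)
  finally have ea: "am = l * ai + m * aj" using XY by (metis less_irrefl mult_right_cancel)
  have "bm * (X\<^sup>2 + Y\<^sup>2) = Sm * Y + Tm * X"
    by (simp add: Si_Sm_Sj_Ti_Tm_Tj_def s_def t_def power2_eq_square algebra_simps)
  also have "\<dots> = l * (Si * Y + Ti * X) + m * (Sj * Y + Tj * X)" by (simp add: eS eT algebra_simps)
  also have "\<dots> = (l * bi + m * bj) * (X\<^sup>2 + Y\<^sup>2)"
    by (simp add: Si_Sm_Sj_Ti_Tm_Tj_def s_def t_def power2_eq_square algebra_simps)
  finally have eb: "bm = l * bi + m * bj" using XY by (metis less_irrefl mult_right_cancel)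
  show ?thesis using l0 m0 ea eb by blast
qed

lemma two_d_ratio_inj:
  fixes X Y :: real
  defines "s \<equiv> \<lambda>a b. a * X + b * Y" and "t \<equiv> \<lambda>a b. b * X - a * Y"
  assumes XY: "X\<^sup>2 + Y\<^sup>2 > 0"
    and si: "s ai bi > 0" and sj: "s aj bj > 0"
    and ui: "ai\<^sup>2 + bi\<^sup>2 = 1" and uj: "aj\<^sup>2 + bj\<^sup>2 = 1"
    and eq: "t ai bi / s ai bi = t aj bj / s aj bj"
  shows "ai = aj \<and> bi = bj"
proof -
  define c where "c = s aj bj / s ai bi"
  have c0: "c > 0" using si sj by (simp add: c_def)
  have eS: "s aj bj = c * s ai bi" using si by (simp add: c_def)
  have eT: "t aj bj = c * t ai bi" using si sj eq by (simp add: c_def field_simps)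
  have "aj * (X\<^sup>2 + Y\<^sup>2) = s aj bj * X - t aj bj * Y"
    by (simp add: s_def t_def power2_eq_square algebra_simps)
  also have "\<dots> = c * (s ai bi * X - t ai bi * Y)" by (simp add: eS eT algebra_simps)
  also have "\<dots> = (c * ai) * (X\<^sup>2 + Y\<^sup>2)"
    by (simp add: s_def t_def power2_eq_square algebra_simps)
  finally have ea: "aj = c * ai" using XY by (metis less_irrefl mult_right_cancel)
  have "bj * (X\<^sup>2 + Y\<^sup>2) = s aj bj * Y + t aj bj * X"
    by (simp add: s_def t_def power2_eq_square algebra_simps)
  also have "\<dots> = c * (s ai bi * Y + t ai bi * X)" by (simp add: eS eT algebra_simps)
  also have "\<dots> = (c * bi) * (X\<^sup>2 + Y\<^sup>2)"
    by (simp add: s_def t_def power2_eq_square algebra_simps)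
  finally have eb: "bj = c * bi" using XY by (metis less_irrefl mult_right_cancel)
  have "c\<^sup>2 * (ai\<^sup>2 + bi\<^sup>2) = 1" using uj ea eb by (simp add: power_mult_distrib algebra_simps)
  then have "c\<^sup>2 = 1" using ui by simp
  then have "c = 1" using c0 by (simp add: power2_eq_1_iff)
  then show ?thesis using ea eb by simp
qed

lemma two_d_three:
  fixes X Y :: real
  defines "s \<equiv> \<lambda>a b. a * X + b * Y"
  assumes XY: "X\<^sup>2 + Y\<^sup>2 > 0"
    and s1: "s a1 b1 > 0" and s2: "s a2 b2 > 0" and s3: "s a3 b3 > 0"
    and u1: "a1\<^sup>2 + b1\<^sup>2 = 1" and u2: "a2\<^sup>2 + b2\<^sup>2 = 1" and u3: "a3\<^sup>2 + b3\<^sup>2 = 1"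
    and d12: "(a1, b1) \<noteq> (a2, b2)" and d13: "(a1, b1) \<noteq> (a3, b3)" and d23: "(a2, b2) \<noteq> (a3, b3)"
  shows "(\<exists>l m. l > 0 \<and> m > 0 \<and> a1 = l * a2 + m * a3 \<and> b1 = l * b2 + m * b3) \<or>
         (\<exists>l m. l > 0 \<and> m > 0 \<and> a2 = l * a1 + m * a3 \<and> b2 = l * b1 + m * b3) \<or>
         (\<exists>l m. l > 0 \<and> m > 0 \<and> a3 = l * a1 + m * a2 \<and> b3 = l * b1 + m * b2)"
proof -
  define t where "t = (\<lambda>a b. b * X - a * Y)"
  define r where "r = (\<lambda>a b. t a b / s a b)"
  have s1': "a1 * X + b1 * Y > 0" and s2': "a2 * X + b2 * Y > 0" and s3': "a3 * X + b3 * Y > 0"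
    using s1 s2 s3 by (simp_all add: s_def)
  note B0 = two_d_between[of X Y, OF XY]
  note I = two_d_ratio_inj[of X Y, OF XY]
  have r12: "r a1 b1 \<noteq> r a2 b2" using I[OF s1' s2' u1 u2] d12 by (auto simp: r_def s_def t_def)
  have r13: "r a1 b1 \<noteq> r a3 b3" using I[OF s1' s3' u1 u3] d13 by (auto simp: r_def s_def t_def)
  have r23: "r a2 b2 \<noteq> r a3 b3" using I[OF s2' s3' u2 u3] d23 by (auto simp: r_def s_def t_def)
  have B': "\<exists>l m. l > 0 \<and> m > 0 \<and> am = l * ai + m * aj \<and> bm = l * bi + m * bj"
    if h: "s ai bi > 0" "s am bm > 0" "s aj bj > 0"
       "(r ai bi < r am bm \<and> r am bm < r aj bj) \<or> (r aj bj < r am bm \<and> r am bm < r ai bi)"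
    for ai bi am bm aj bj
    using h(4)
  proof (elim disjE conjE)
    assume "r ai bi < r am bm" "r am bm < r aj bj"
    then show ?thesis using B0[of ai bi am bm aj bj] h(1-3) by (simp add: r_def s_def t_def)
  next
    assume "r aj bj < r am bm" "r am bm < r ai bi"
    then obtain l m where "l > 0" "m > 0" "am = l * aj + m * ai" "bm = l * bj + m * bi"
      using B0[of aj bj am bm ai bi] h(1-3) by (auto simp: r_def s_def t_def)
    then show ?thesis by (metis add.commute)
  qed
  consider "r a1 b1 < r a2 b2 \<and> r a2 b2 < r a3 b3 \<or> r a3 b3 < r a2 b2 \<and> r a2 b2 < r a1 b1"
    | "r a2 b2 < r a1 b1 \<and> r a1 b1 < r a3 b3 \<or> r a3 b3 < r a1 b1 \<and> r a1 b1 < r a2 b2"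
    | "r a1 b1 < r a3 b3 \<and> r a3 b3 < r a2 b2 \<or> r a2 b2 < r a3 b3 \<and> r a3 b3 < r a1 b1"
    using r12 r13 r23 by linarith
  then show ?thesis
  proof cases
    case 1 then show ?thesis using B'[OF s1 s2 s3] by blast
  next
    case 2 then show ?thesis using B'[OF s2 s1 s3] by blast
  next
    case 3 then show ?thesis using B'[OF s1 s3 s2] by blast
  qed
qed


lemma det_neg:
  fixes a b c d :: real
  assumes "a\<^sup>2 + b\<^sup>2 = 1" "c\<^sup>2 + d\<^sup>2 = 1" "a * c + b * d = 0" "b > 0" "c > 0"
  shows "a * d - b * c = -1"
proof -
  define k where "k = a * d - b * c"
  have c: "c = - b * k"
  proof -
    have "c = c * (a\<^sup>2 + b\<^sup>2)" using assms(1) by simp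
    also have "\<dots> = a * (a * c) + b\<^sup>2 * c" by (simp add: power2_eq_square algebra_simps)
    also have "\<dots> = a * (- b * d) + b\<^sup>2 * c"
    proof -
      have "a * c = - b * d" using assms(3) by linarith
      then show ?thesis by simp
    qed
    also have "\<dots> = - b * k" by (simp add: k_def power2_eq_square algebra_simps)
    finally show ?thesis .
  qed
  have d: "d = a * k"
  proof -
    have "d = d * (a\<^sup>2 + b\<^sup>2)" using assms(1) by simp
    also have "\<dots> = a\<^sup>2 * d + b * (b * d)" by (simp add: power2_eq_square algebra_simps)
    also have "\<dots> = a\<^sup>2 * d + b * (- a * c)"
    proof -
      have "b * d = - a * c" using assms(3) by linarith
      then show ?thesis by simp
    qed
    also have "\<dots> = a * k" by (simp add: k_def power2_eq_square algebra_simps)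
    finally show ?thesis .
  qed
  have "1 = c\<^sup>2 + d\<^sup>2" using assms(2) by simp
  also have "\<dots> = k\<^sup>2 * (a\<^sup>2 + b\<^sup>2)" by (simp add: c d power2_eq_square algebra_simps)
  finally have k2: "k\<^sup>2 = 1" using assms(1) by simp
  have "b * k < 0" using c assms(5) by linarith
  then have "k < 0" using assms(4) by (simp add: mult_less_0_iff)
  then show ?thesis using k2 by (simp add: k_def power2_eq_1_iff)
qed

lemma normal_relint_pos:
  fixes A B :: "'n::euclidean_space set"
  assumes cA: "convex A" and fB: "B face_of A" and ne: "B \<noteq> {}" and dimAB: "aff_dim A = aff_dim B + 1"
    and q: "q \<in> rel_interior A" and x: "x \<in> B"
  shows "gnormal A B \<bullet> (q - x) > 0"
proof -
  have qA: "q \<in> A" using q rel_interior_subset by blast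
  have "A \<noteq> B" using dimAB by auto
  have "gnormal A B \<bullet> (q - x) \<ge> 0" using gnormal_props(4)[OF assms(1-4) qA x] .
  moreover have "gnormal A B \<bullet> (q - x) \<noteq> 0"
  proof
    assume "gnormal A B \<bullet> (q - x) = 0"
    then have "q \<in> {y \<in> A. gnormal A B \<bullet> (y - x) = 0}" using qA by simp
    then have "q \<in> B" using facet_eq_hyper[OF assms(1-4) x] by blast
    then show False using face_of_disjoint_rel_interior[OF fB] \<open>A \<noteq> B\<close> q by blast
  qed
  ultimately show ?thesis by simp
qed

context
  fixes S R :: "'n::euclidean_space set"
  assumes polyS: "polyhedron S" and fR: "R face_of S" and neR: "R \<noteq> {}"
    and dSR: "aff_dim S = aff_dim R + 2"
begin

lemma cS: "convex S" using polyS polyhedron_imp_convex by blast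

lemma FT:
  assumes "T face_of S" "R \<subseteq> T" "aff_dim S = aff_dim T + 1"
  shows "T \<noteq> {}" "convex T" "R face_of T" "aff_dim T = aff_dim R + 1" "T \<subseteq> S"
proof -
  show "T \<noteq> {}" using assms(2) neR by blast
  show "convex T" using assms(1) face_of_imp_convex by blast
  show "R face_of T" using face_of_subset[OF fR assms(2)] face_of_imp_subset[OF assms(1)] by blast
  show "aff_dim T = aff_dim R + 1" using assms(3) dSR by simp
  show "T \<subseteq> S" using face_of_imp_subset[OF assms(1)] .
qed

lemma decomp:
  assumes T1: "T1 face_of S" "R \<subseteq> T1" "aff_dim S = aff_dim T1 + 1"
    and w: "w \<in> dirS S" "\<And>v. v \<in> dirS R \<Longrightarrow> w \<bullet> v = 0"
  shows "w = (w \<bullet> gnormal S T1) *\<^sub>R gnormal S T1 + (w \<bullet> gnormal T1 R) *\<^sub>R gnormal T1 R"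
proof -
  note F = FT[OF T1]
  define n1 where "n1 = gnormal S T1"
  define u1 where "u1 = gnormal T1 R"
  note G1 = gnormal_props[OF cS T1(1) F(1) T1(3), folded n1_def]
  note G2 = gnormal_props[OF F(2) F(3) neR F(4), folded u1_def]
  have sRT: "dirS R \<subseteq> dirS T1" using dirS_mono F(3) face_of_imp_subset by blast
  have sTS: "dirS T1 \<subseteq> dirS S" using dirS_mono F(5) by blast
  have nu: "n1 \<bullet> u1 = 0" using G1(3) G2(2) by blast
  define r where "r = w - (w \<bullet> n1) *\<^sub>R n1 - (w \<bullet> u1) *\<^sub>R u1"
  have "r \<in> dirS S" using w(1) G1(2) G2(2) sTS
    by (simp add: r_def subspace_diff subspace_scale subset_iff)
  moreover have "n1 \<bullet> r = 0" using G1(1) nu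
    by (simp add: r_def inner_diff_right norm_eq_1 inner_commute)
  ultimately have rT: "r \<in> dirS T1" using G1(6) by blast
  moreover have "u1 \<bullet> r = 0" using G2(1) nu
    by (simp add: r_def inner_diff_right norm_eq_1 inner_commute)
  ultimately have rR: "r \<in> dirS R" using G2(6) by blast
  have "w \<bullet> r = 0" using w(2) rR by blast
  moreover have "n1 \<bullet> r = 0" "u1 \<bullet> r = 0" using G1(3) G2(3) rR sRT \<open>n1 \<bullet> r = 0\<close> \<open>u1 \<bullet> r = 0\<close> by auto
  ultimately have "r \<bullet> r = 0"
    by (simp add: r_def inner_diff_left inner_commute)
  then have "r = 0" by simp
  then show ?thesis unfolding r_def n1_def[symmetric] u1_def[symmetric] by (simp add: algebra_simps)
qed

lemma normal_orth_R:
  assumes T: "T face_of S" "R \<subseteq> T" "aff_dim S = aff_dim T + 1" and v: "v \<in> dirS R"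
  shows "gnormal S T \<bullet> v = 0"
proof -
  note F = FT[OF T]
  have "v \<in> dirS T" using v dirS_mono[OF T(2)] by blast
  then show ?thesis using gnormal_props(3)[OF cS T(1) F(1) T(3)] by blast
qed

lemma unormal_props:
  assumes T: "T face_of S" "R \<subseteq> T" "aff_dim S = aff_dim T + 1"
  shows "gnormal T R \<in> dirS S" "\<And>v. v \<in> dirS R \<Longrightarrow> gnormal T R \<bullet> v = 0" "norm (gnormal T R) = 1"
    "gnormal S T \<bullet> gnormal T R = 0"
proof -
  note F = FT[OF T]
  note G2 = gnormal_props[OF F(2) F(3) neR F(4)]
  show "gnormal T R \<in> dirS S" using G2(2) dirS_mono[OF F(5)] by blast
  show "\<And>v. v \<in> dirS R \<Longrightarrow> gnormal T R \<bullet> v = 0" using G2(3) .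
  show "norm (gnormal T R) = 1" using G2(1) .
  show "gnormal S T \<bullet> gnormal T R = 0" using gnormal_props(3)[OF cS T(1) F(1) T(3)] G2(2) by blast
qed

lemma facet_hyper_R:
  assumes T: "T face_of S" "R \<subseteq> T" "aff_dim S = aff_dim T + 1" and p: "p \<in> R"
  shows "T = {y \<in> S. gnormal S T \<bullet> (y - p) = 0}"
  using facet_eq_hyper[OF cS T(1) FT(1)[OF T] T(3)] p T(2) by blast

lemma normal_inj:
  assumes T1: "T1 face_of S" "R \<subseteq> T1" "aff_dim S = aff_dim T1 + 1"
    and T2: "T2 face_of S" "R \<subseteq> T2" "aff_dim S = aff_dim T2 + 1"
    and eq: "gnormal S T1 = gnormal S T2"
  shows "T1 = T2"
proof -
  obtain p where "p \<in> R" using neR by blast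
  then show ?thesis using facet_hyper_R[OF T1] facet_hyper_R[OF T2] eq by simp
qed

lemma sep:
  assumes T1: "T1 face_of S" "R \<subseteq> T1" "aff_dim S = aff_dim T1 + 1"
    and T2: "T2 face_of S" "R \<subseteq> T2" "aff_dim S = aff_dim T2 + 1"
    and ne: "T1 \<noteq> T2"
  shows "gnormal S T2 \<bullet> gnormal T1 R > 0"
proof -
  note F1 = FT[OF T1] and F2 = FT[OF T2]
  define n1 where "n1 = gnormal S T1"
  define n2 where "n2 = gnormal S T2"
  define u1 where "u1 = gnormal T1 R"
  note G1 = gnormal_props[OF cS T1(1) F1(1) T1(3), folded n1_def]
  note G2 = gnormal_props[OF cS T2(1) F2(1) T2(3), folded n2_def]
  note H1 = gnormal_props[OF F1(2) F1(3) neR F1(4), folded u1_def]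
  obtain y1 x where yx: "y1 \<in> T1" "x \<in> R" "u1 \<bullet> (y1 - x) > 0" using H1(5) by blast
  have xT1: "x \<in> T1" using yx(2) T1(2) by blast
  have ge: "n2 \<bullet> (y1 - x) \<ge> 0" using G2(4) yx(1,2) F1(5) T2(2) by blast
  define r where "r = (y1 - x) - (u1 \<bullet> (y1 - x)) *\<^sub>R u1"
  have "r \<in> dirS T1" using diff_in_dirS[OF yx(1) xT1] H1(2)
    by (simp add: r_def subspace_diff subspace_scale)
  moreover have "u1 \<bullet> r = 0" using H1(1) by (simp add: r_def inner_diff_right norm_eq_1)
  ultimately have "r \<in> dirS R" using H1(6) by blast
  then have "n2 \<bullet> r = 0" using normal_orth_R[OF T2] by (simp add: n2_def)
  then have "n2 \<bullet> (y1 - x) = (u1 \<bullet> (y1 - x)) * (n2 \<bullet> u1)"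
    by (simp add: r_def inner_diff_right)
  with ge yx(3) have nn: "n2 \<bullet> u1 \<ge> 0" by (simp add: zero_le_mult_iff)
  have "n2 \<bullet> u1 \<noteq> 0"
  proof
    assume z: "n2 \<bullet> u1 = 0"
    have "n2 = (n2 \<bullet> n1) *\<^sub>R n1 + (n2 \<bullet> u1) *\<^sub>R u1"
      using decomp[OF T1 G2(2)] normal_orth_R[OF T2] by (simp add: n1_def n2_def u1_def)
    then have nd: "n2 = (n2 \<bullet> n1) *\<^sub>R n1" using z by simp
    then have "norm n2 = \<bar>n2 \<bullet> n1\<bar> * norm n1" by (metis norm_scaleR)
    then have "\<bar>n2 \<bullet> n1\<bar> = 1" using G1(1) G2(1) by simp
    then consider "n2 \<bullet> n1 = 1" | "n2 \<bullet> n1 = -1" by linarith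
    then show False
    proof cases
      case 1
      then have "n2 = n1" using nd by simp
      then show False using normal_inj[OF T1 T2] ne by (simp add: n1_def n2_def)
    next
      case 2
      then have "n2 = - n1" using nd by simp
      obtain q where q: "q \<in> rel_interior S"
        using cS rel_interior_eq_empty F1(5) F1(1) by blast
      have "n1 \<bullet> (q - x) > 0" using normal_relint_pos[OF cS T1(1) F1(1) T1(3) q xT1] by (simp add: n1_def)
      moreover have "n2 \<bullet> (q - x) > 0" using normal_relint_pos[OF cS T2(1) F2(1) T2(3) q] yx(2) T2(2)
        by (auto simp: n2_def)
      ultimately show False using \<open>n2 = - n1\<close> by simp
    qed
  qed
  then show ?thesis using nn by (simp add: n2_def u1_def)
qed


lemma mid_contra:
  assumes Ti: "Ti face_of S" "R \<subseteq> Ti" "aff_dim S = aff_dim Ti + 1"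
    and Tj: "Tj face_of S" "R \<subseteq> Tj" "aff_dim S = aff_dim Tj + 1"
    and Tm: "Tm face_of S" "R \<subseteq> Tm" "aff_dim S = aff_dim Tm + 1"
    and ne: "Ti \<noteq> Tj" and l: "l > 0" and m: "m > 0"
    and eq: "gnormal S Tm = l *\<^sub>R gnormal S Ti + m *\<^sub>R gnormal S Tj"
  shows False
proof -
  obtain p where p: "p \<in> R" using neR by blast
  note Fi = FT[OF Ti] and Fj = FT[OF Tj] and Fm = FT[OF Tm]
  have sub: "Tm \<subseteq> Ti \<inter> Tj"
  proof
    fix y assume y: "y \<in> Tm"
    then have yS: "y \<in> S" and y0: "gnormal S Tm \<bullet> (y - p) = 0"
      using facet_hyper_R[OF Tm p] by blast+
    have pi: "p \<in> Ti" and pj: "p \<in> Tj" using p Ti(2) Tj(2) by blast+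
    have gi: "gnormal S Ti \<bullet> (y - p) \<ge> 0" using gnormal_props(4)[OF cS Ti(1) Fi(1) Ti(3) yS pi] .
    have gj: "gnormal S Tj \<bullet> (y - p) \<ge> 0" using gnormal_props(4)[OF cS Tj(1) Fj(1) Tj(3) yS pj] .
    have "l * (gnormal S Ti \<bullet> (y - p)) + m * (gnormal S Tj \<bullet> (y - p)) = 0"
      using y0 eq by (simp add: inner_add_left)
    then have "gnormal S Ti \<bullet> (y - p) = 0" "gnormal S Tj \<bullet> (y - p) = 0"
      using gi gj l m by (smt (verit) mult_pos_pos mult_nonneg_nonneg)+
    then show "y \<in> Ti \<inter> Tj" using facet_hyper_R[OF Ti p] facet_hyper_R[OF Tj p] yS by blast
  qed
  have fij: "(Ti \<inter> Tj) face_of Ti"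
    using face_of_Int[OF Ti(1) Tj(1)] face_of_subset Fi(5) by blast
  have "Ti \<inter> Tj \<noteq> Ti"
  proof
    assume "Ti \<inter> Tj = Ti"
    then have "Ti \<subseteq> Tj" by blast
    then have "Ti face_of Tj" using face_of_subset[OF Ti(1)] Fj(5) by blast
    then have "aff_dim Ti < aff_dim Tj" using face_of_aff_dim_lt[OF Fj(2)] ne by blast
    then show False using Ti(3) Tj(3) by simp
  qed
  then have "aff_dim (Ti \<inter> Tj) < aff_dim Ti" using face_of_aff_dim_lt[OF Fi(2) fij] by blast
  moreover have "aff_dim Tm \<le> aff_dim (Ti \<inter> Tj)" using sub aff_dim_subset by blast
  ultimately show False using Ti(3) Tm(3) by simp
qed

lemma at_most_two:
  assumes T1: "T1 face_of S" "R \<subseteq> T1" "aff_dim S = aff_dim T1 + 1"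
    and T2: "T2 face_of S" "R \<subseteq> T2" "aff_dim S = aff_dim T2 + 1"
    and T3: "T3 face_of S" "R \<subseteq> T3" "aff_dim S = aff_dim T3 + 1"
    and d12: "T1 \<noteq> T2" and d13: "T1 \<noteq> T3" and d23: "T2 \<noteq> T3"
  shows False
proof -
  obtain p where p: "p \<in> R" using neR by blast
  note F1 = FT[OF T1]
  obtain q where q: "q \<in> rel_interior S"
    using cS rel_interior_eq_empty F1(5) F1(1) by blast
  define n1 where "n1 = gnormal S T1"
  define u1 where "u1 = gnormal T1 R"
  note U = unormal_props[OF T1, folded n1_def u1_def]
  have n1n: "norm n1 = 1" using gnormal_props(1)[OF cS T1(1) F1(1) T1(3)] by (simp add: n1_def)
  define X where "X = n1 \<bullet> (q - p)"
  define Y where "Y = u1 \<bullet> (q - p)"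
  have X0: "X > 0" using normal_relint_pos[OF cS T1(1) F1(1) T1(3) q] p T1(2) by (auto simp: X_def n1_def)
  then have XY: "X\<^sup>2 + Y\<^sup>2 > 0" by (simp add: add_pos_nonneg)
  have coords: "gnormal S T = (gnormal S T \<bullet> n1) *\<^sub>R n1 + (gnormal S T \<bullet> u1) *\<^sub>R u1 \<and>
      (gnormal S T \<bullet> n1)\<^sup>2 + (gnormal S T \<bullet> u1)\<^sup>2 = 1 \<and>
      (gnormal S T \<bullet> n1) * X + (gnormal S T \<bullet> u1) * Y > 0"
    if T: "T face_of S" "R \<subseteq> T" "aff_dim S = aff_dim T + 1" for T
  proof -
    note F = FT[OF T]
    define n where "n = gnormal S T"
    have nd: "n = (n \<bullet> n1) *\<^sub>R n1 + (n \<bullet> u1) *\<^sub>R u1"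
      using decomp[OF T1 gnormal_props(2)[OF cS T(1) F(1) T(3)]] normal_orth_R[OF T]
      by (simp add: n_def n1_def u1_def)
    have "1 = n \<bullet> n" using gnormal_props(1)[OF cS T(1) F(1) T(3)] by (simp add: n_def norm_eq_1)
    also have "\<dots> = ((n \<bullet> n1) *\<^sub>R n1 + (n \<bullet> u1) *\<^sub>R u1) \<bullet> ((n \<bullet> n1) *\<^sub>R n1 + (n \<bullet> u1) *\<^sub>R u1)"
      using nd by simp
    also have "\<dots> = (n \<bullet> n1)\<^sup>2 + (n \<bullet> u1)\<^sup>2"
      using n1n U(3) U(4) by (simp add: inner_add_left inner_add_right power2_eq_square norm_eq_1 inner_commute)
    finally have nn: "(n \<bullet> n1)\<^sup>2 + (n \<bullet> u1)\<^sup>2 = 1" by simp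
    have "n \<bullet> (q - p) > 0" using normal_relint_pos[OF cS T(1) F(1) T(3) q] p T(2) by (auto simp: n_def)
    also have "n \<bullet> (q - p) = (n \<bullet> n1) * X + (n \<bullet> u1) * Y"
      by (subst nd) (simp add: inner_add_left X_def Y_def)
    finally show ?thesis using nd nn by (simp add: n_def)
  qed
  note C1 = coords[OF T1] and C2 = coords[OF T2] and C3 = coords[OF T3]
  have dist: "(gnormal S Ti \<bullet> n1, gnormal S Ti \<bullet> u1) \<noteq> (gnormal S Tj \<bullet> n1, gnormal S Tj \<bullet> u1)"
    if Ti: "Ti face_of S" "R \<subseteq> Ti" "aff_dim S = aff_dim Ti + 1"
      and Tj: "Tj face_of S" "R \<subseteq> Tj" "aff_dim S = aff_dim Tj + 1" and "Ti \<noteq> Tj" for Ti Tj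
  proof
    assume "(gnormal S Ti \<bullet> n1, gnormal S Ti \<bullet> u1) = (gnormal S Tj \<bullet> n1, gnormal S Tj \<bullet> u1)"
    then have "gnormal S Ti = gnormal S Tj" using coords[OF Ti] coords[OF Tj] by (metis prod.inject)
    then show False using normal_inj[OF Ti Tj] \<open>Ti \<noteq> Tj\<close> by blast
  qed
  have comb: "gnormal S Tm = l *\<^sub>R gnormal S Ti + m *\<^sub>R gnormal S Tj"
    if Ti: "Ti face_of S" "R \<subseteq> Ti" "aff_dim S = aff_dim Ti + 1"
      and Tj: "Tj face_of S" "R \<subseteq> Tj" "aff_dim S = aff_dim Tj + 1"
      and Tm: "Tm face_of S" "R \<subseteq> Tm" "aff_dim S = aff_dim Tm + 1"
      and e: "gnormal S Tm \<bullet> n1 = l * (gnormal S Ti \<bullet> n1) + m * (gnormal S Tj \<bullet> n1)"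
        "gnormal S Tm \<bullet> u1 = l * (gnormal S Ti \<bullet> u1) + m * (gnormal S Tj \<bullet> u1)" for Ti Tj Tm l m
  proof -
    have "gnormal S Tm = (l * (gnormal S Ti \<bullet> n1) + m * (gnormal S Tj \<bullet> n1)) *\<^sub>R n1
       + (l * (gnormal S Ti \<bullet> u1) + m * (gnormal S Tj \<bullet> u1)) *\<^sub>R u1"
      using coords[OF Tm] e by metis
    also have "\<dots> = l *\<^sub>R ((gnormal S Ti \<bullet> n1) *\<^sub>R n1 + (gnormal S Ti \<bullet> u1) *\<^sub>R u1)
       + m *\<^sub>R ((gnormal S Tj \<bullet> n1) *\<^sub>R n1 + (gnormal S Tj \<bullet> u1) *\<^sub>R u1)"
      by (simp add: algebra_simps)
    also have "\<dots> = l *\<^sub>R gnormal S Ti + m *\<^sub>R gnormal S Tj"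
      using coords[OF Ti] coords[OF Tj] by metis
    finally show ?thesis .
  qed
  have "(\<exists>l m. l > 0 \<and> m > 0 \<and> gnormal S T1 \<bullet> n1 = l * (gnormal S T2 \<bullet> n1) + m * (gnormal S T3 \<bullet> n1) \<and> gnormal S T1 \<bullet> u1 = l * (gnormal S T2 \<bullet> u1) + m * (gnormal S T3 \<bullet> u1)) \<or>
        (\<exists>l m. l > 0 \<and> m > 0 \<and> gnormal S T2 \<bullet> n1 = l * (gnormal S T1 \<bullet> n1) + m * (gnormal S T3 \<bullet> n1) \<and> gnormal S T2 \<bullet> u1 = l * (gnormal S T1 \<bullet> u1) + m * (gnormal S T3 \<bullet> u1)) \<or>
        (\<exists>l m. l > 0 \<and> m > 0 \<and> gnormal S T3 \<bullet> n1 = l * (gnormal S T1 \<bullet> n1) + m * (gnormal S T2 \<bullet> n1) \<and> gnormal S T3 \<bullet> u1 = l * (gnormal S T1 \<bullet> u1) + m * (gnormal S T2 \<bullet> u1))"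
    by (rule two_d_three[OF XY])
       (use C1 C2 C3 dist[OF T1 T2 d12] dist[OF T1 T3 d13] dist[OF T2 T3 d23] in auto)
  then show False
  proof (elim disjE exE conjE)
    fix l m assume h: "l > 0" "m > 0"
      "gnormal S T1 \<bullet> n1 = l * (gnormal S T2 \<bullet> n1) + m * (gnormal S T3 \<bullet> n1)"
      "gnormal S T1 \<bullet> u1 = l * (gnormal S T2 \<bullet> u1) + m * (gnormal S T3 \<bullet> u1)"
    show False using mid_contra[OF T2 T3 T1 d23 h(1,2) comb[OF T2 T3 T1 h(3,4)]] .
  next
    fix l m assume h: "l > 0" "m > 0"
      "gnormal S T2 \<bullet> n1 = l * (gnormal S T1 \<bullet> n1) + m * (gnormal S T3 \<bullet> n1)"
      "gnormal S T2 \<bullet> u1 = l * (gnormal S T1 \<bullet> u1) + m * (gnormal S T3 \<bullet> u1)"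
    show False using mid_contra[OF T1 T3 T2 d13 h(1,2) comb[OF T1 T3 T2 h(3,4)]] .
  next
    fix l m assume h: "l > 0" "m > 0"
      "gnormal S T3 \<bullet> n1 = l * (gnormal S T1 \<bullet> n1) + m * (gnormal S T2 \<bullet> n1)"
      "gnormal S T3 \<bullet> u1 = l * (gnormal S T1 \<bullet> u1) + m * (gnormal S T2 \<bullet> u1)"
    show False using mid_contra[OF T1 T2 T3 d12 h(1,2) comb[OF T1 T2 T3 h(3,4)]] .
  qed
qed

lemma at_least_two:
  obtains T1 T2 where "T1 face_of S" "R \<subseteq> T1" "aff_dim S = aff_dim T1 + 1"
    "T2 face_of S" "R \<subseteq> T2" "aff_dim S = aff_dim T2 + 1" "T1 \<noteq> T2"
proof -
  have "R \<noteq> S" using dSR by auto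
  then have Req: "R = \<Inter>{F. F facet_of S \<and> R \<subseteq> F}" using face_of_polyhedron[OF polyS fR neR] by blast
  let ?F = "{F. F facet_of S \<and> R \<subseteq> F}"
  have good: "F face_of S \<and> R \<subseteq> F \<and> aff_dim S = aff_dim F + 1" if "F \<in> ?F" for F
    using that by (auto simp: facet_of_def)
  have "?F \<noteq> {}"
  proof
    assume "?F = {}"
    then have "R = UNIV" using Req by (metis Inter_empty)
    then have "aff_dim S \<le> aff_dim R" using aff_dim_subset[of S R] by simp
    then show False using dSR by simp
  qed
  then obtain T1 where T1: "T1 \<in> ?F" by blast
  have "\<exists>T2 \<in> ?F. T2 \<noteq> T1"
  proof (rule ccontr)
    assume "\<not> ?thesis"
    then have "?F = {T1}" using T1 by blast
    then have "R = T1" using Req by simp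
    then show False using good[OF T1] dSR by simp
  qed
  then obtain T2 where "T2 \<in> ?F" "T2 \<noteq> T1" by blast
  then show ?thesis using that[of T1 T2] good[OF T1] good[of T2] by metis
qed


lemma facets_eq_two:
  obtains T1 T2 where "T1 face_of S" "R \<subseteq> T1" "aff_dim S = aff_dim T1 + 1"
    "T2 face_of S" "R \<subseteq> T2" "aff_dim S = aff_dim T2 + 1" "T1 \<noteq> T2"
    "{T. T face_of S \<and> R \<subseteq> T \<and> aff_dim S = aff_dim T + 1} = {T1, T2}"
proof -
  obtain T1 T2 where T1: "T1 face_of S" "R \<subseteq> T1" "aff_dim S = aff_dim T1 + 1"
    and T2: "T2 face_of S" "R \<subseteq> T2" "aff_dim S = aff_dim T2 + 1" and ne: "T1 \<noteq> T2"
    by (rule at_least_two)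
  have "{T. T face_of S \<and> R \<subseteq> T \<and> aff_dim S = aff_dim T + 1} = {T1, T2}"
  proof (rule set_eqI, rule iffI)
    fix T assume "T \<in> {T. T face_of S \<and> R \<subseteq> T \<and> aff_dim S = aff_dim T + 1}"
    then have T: "T face_of S" "R \<subseteq> T" "aff_dim S = aff_dim T + 1" by auto
    show "T \<in> {T1, T2}"
    proof (rule ccontr)
      assume "T \<notin> {T1, T2}"
      then show False using at_most_two[OF T1 T2 T ne] by auto
    qed
  qed (use T1 T2 in auto)
  then show ?thesis using that T1 T2 ne by blast
qed

lemma orthocoords:
  fixes n u :: "'n"
  assumes "norm n = 1" "norm u = 1" "n \<bullet> u = 0"
  shows "(a *\<^sub>R n + b *\<^sub>R u) \<bullet> (c *\<^sub>R n + d *\<^sub>R u) = a * c + b * d"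
  using assms by (simp add: inner_add_left inner_add_right norm_eq_1 inner_commute)

lemma codim2_identity:
  assumes f: "linear f"
  shows "finite {T. T face_of S \<and> R \<subseteq> T \<and> aff_dim S = aff_dim T + 1}"
    "(\<Sum>T\<in>{T. T face_of S \<and> R \<subseteq> T \<and> aff_dim S = aff_dim T + 1}.
        f (gnormal S T) * (z \<bullet> gnormal T R) - (z \<bullet> gnormal S T) * f (gnormal T R)) = 0"
proof -
  obtain T1 T2 where T1: "T1 face_of S" "R \<subseteq> T1" "aff_dim S = aff_dim T1 + 1"
    and T2: "T2 face_of S" "R \<subseteq> T2" "aff_dim S = aff_dim T2 + 1" and ne: "T1 \<noteq> T2"
    and eq: "{T. T face_of S \<and> R \<subseteq> T \<and> aff_dim S = aff_dim T + 1} = {T1, T2}"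
    by (rule facets_eq_two)
  show "finite {T. T face_of S \<and> R \<subseteq> T \<and> aff_dim S = aff_dim T + 1}" using eq by simp
  note F1 = FT[OF T1] and F2 = FT[OF T2]
  define n1 where "n1 = gnormal S T1"
  define u1 where "u1 = gnormal T1 R"
  define n2 where "n2 = gnormal S T2"
  define u2 where "u2 = gnormal T2 R"
  note U1 = unormal_props[OF T1, folded n1_def u1_def]
  note U2 = unormal_props[OF T2, folded n2_def u2_def]
  have n1n: "norm n1 = 1" using gnormal_props(1)[OF cS T1(1) F1(1) T1(3)] by (simp add: n1_def)
  have n2n: "norm n2 = 1" using gnormal_props(1)[OF cS T2(1) F2(1) T2(3)] by (simp add: n2_def)
  define \<alpha> where "\<alpha> = n2 \<bullet> n1"
  define \<beta> where "\<beta> = n2 \<bullet> u1"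
  define \<gamma> where "\<gamma> = u2 \<bullet> n1"
  define \<delta> where "\<delta> = u2 \<bullet> u1"
  have n2d: "n2 = \<alpha> *\<^sub>R n1 + \<beta> *\<^sub>R u1"
    using decomp[OF T1 gnormal_props(2)[OF cS T2(1) F2(1) T2(3)]] normal_orth_R[OF T2]
    by (simp add: n1_def u1_def n2_def \<alpha>_def \<beta>_def)
  have u2d: "u2 = \<gamma> *\<^sub>R n1 + \<delta> *\<^sub>R u1"
    using decomp[OF T1 U2(1) U2(2)] by (simp add: n1_def u1_def u2_def \<gamma>_def \<delta>_def)
  have oc: "\<And>a b c d. (a *\<^sub>R n1 + b *\<^sub>R u1) \<bullet> (c *\<^sub>R n1 + d *\<^sub>R u1) = a * c + b * d"
    using orthocoords[OF n1n U1(3) U1(4)] .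
  have e1: "\<alpha>\<^sup>2 + \<beta>\<^sup>2 = 1"
  proof -
    have "1 = n2 \<bullet> n2" using n2n by (simp add: norm_eq_1)
    also have "\<dots> = \<alpha>\<^sup>2 + \<beta>\<^sup>2" by (subst (1 2) n2d) (simp add: oc power2_eq_square)
    finally show ?thesis by simp
  qed
  have e2: "\<gamma>\<^sup>2 + \<delta>\<^sup>2 = 1"
  proof -
    have "1 = u2 \<bullet> u2" using U2(3) by (simp add: norm_eq_1)
    also have "\<dots> = \<gamma>\<^sup>2 + \<delta>\<^sup>2" by (subst (1 2) u2d) (simp add: oc power2_eq_square)
    finally show ?thesis by simp
  qed
  have e3: "\<alpha> * \<gamma> + \<beta> * \<delta> = 0"
  proof -
    have "0 = n2 \<bullet> u2" using U2(4) by simp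
    also have "\<dots> = \<alpha> * \<gamma> + \<beta> * \<delta>" by (subst n2d, subst u2d) (simp add: oc)
    finally show ?thesis by simp
  qed
  have b0: "\<beta> > 0" using sep[OF T1 T2 ne] by (simp add: \<beta>_def n2_def u1_def)
  have c0: "\<gamma> > 0" using sep[OF T2 T1 ne[symmetric]] by (simp add: \<gamma>_def n1_def u2_def inner_commute)
  have k: "\<alpha> * \<delta> - \<beta> * \<gamma> = -1" using det_neg[OF e1 e2 e3 b0 c0] .
  have fn2: "f n2 = \<alpha> * f n1 + \<beta> * f u1" using n2d linear_add[OF f] linear_scale[OF f] by simp
  have fu2: "f u2 = \<gamma> * f n1 + \<delta> * f u1" using u2d linear_add[OF f] linear_scale[OF f] by simp
  have zn2: "z \<bullet> n2 = \<alpha> * (z \<bullet> n1) + \<beta> * (z \<bullet> u1)" using n2d by (simp add: inner_add_right)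
  have zu2: "z \<bullet> u2 = \<gamma> * (z \<bullet> n1) + \<delta> * (z \<bullet> u1)" using u2d by (simp add: inner_add_right)
  have "(\<Sum>T\<in>{T1, T2}. f (gnormal S T) * (z \<bullet> gnormal T R) - (z \<bullet> gnormal S T) * f (gnormal T R))
     = (f n1 * (z \<bullet> u1) - (z \<bullet> n1) * f u1) + (f n2 * (z \<bullet> u2) - (z \<bullet> n2) * f u2)"
    using ne by (simp add: n1_def n2_def u1_def u2_def)
  also have "\<dots> = (1 + (\<alpha> * \<delta> - \<beta> * \<gamma>)) * (f n1 * (z \<bullet> u1) - (z \<bullet> n1) * f u1)"
    unfolding fn2 fu2 zn2 zu2 by (simp add: algebra_simps)
  also have "\<dots> = 0" using k by simp
  finally show "(\<Sum>T\<in>{T. T face_of S \<and> R \<subseteq> T \<and> aff_dim S = aff_dim T + 1}.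
        f (gnormal S T) * (z \<bullet> gnormal T R) - (z \<bullet> gnormal S T) * f (gnormal T R)) = 0"
    using eq by simp
qed

end


lemma EC_parts:
  assumes "eucl_complex iota P"
  shows "\<Union>P = UNIV" "\<forall>x. \<exists>W. open W \<and> x \<in> W \<and> finite {s\<in>P. s \<inter> W \<noteq> {}}"
    "\<forall>s\<in>P. closed s \<and> inj_on iota s \<and> (\<exists>g. homeomorphism s (iota ` s) iota g) \<and> polyhedron (iota ` s)"
    "\<forall>s\<in>P. \<forall>t. is_face iota t s \<and> t \<noteq> {} \<longrightarrow> t \<in> P"
    "\<forall>s\<in>P. \<forall>s'\<in>P. is_face iota (s \<inter> s') s \<and> is_face iota (s \<inter> s') s'"
proof -
  note H = assms[unfolded eucl_complex_def]
  from H show "\<Union>P = UNIV" by (rule conjunct1)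
  from H show "\<forall>x. \<exists>W. open W \<and> x \<in> W \<and> finite {s\<in>P. s \<inter> W \<noteq> {}}" by (rule conjunct2[THEN conjunct1])
  from H show "\<forall>s\<in>P. closed s \<and> inj_on iota s \<and> (\<exists>g. homeomorphism s (iota ` s) iota g) \<and> polyhedron (iota ` s)"
    by (rule conjunct2[THEN conjunct2, THEN conjunct1])
  from H show "\<forall>s\<in>P. \<forall>t. is_face iota t s \<and> t \<noteq> {} \<longrightarrow> t \<in> P"
    by (rule conjunct2[THEN conjunct2, THEN conjunct2, THEN conjunct1])
  from H show "\<forall>s\<in>P. \<forall>s'\<in>P. is_face iota (s \<inter> s') s \<and> is_face iota (s \<inter> s') s'"
    by (rule conjunct2[THEN conjunct2, THEN conjunct2, THEN conjunct2])
qed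

lemma EC_cell:
  assumes "eucl_complex iota P" "s \<in> P"
  shows "closed s" "inj_on iota s" "\<exists>g. homeomorphism s (iota ` s) iota g"
    "polyhedron (iota ` s)" "convex (iota ` s)"
proof -
  have h: "closed s \<and> inj_on iota s \<and> (\<exists>g. homeomorphism s (iota ` s) iota g) \<and> polyhedron (iota ` s)"
    using EC_parts(3)[OF assms(1)] assms(2) by (rule bspec)
  from h show "closed s" by (rule conjunct1)
  from h show "inj_on iota s" by (rule conjunct2[THEN conjunct1])
  from h show "\<exists>g. homeomorphism s (iota ` s) iota g" by (rule conjunct2[THEN conjunct2, THEN conjunct1])
  from h show "polyhedron (iota ` s)" by (rule conjunct2[THEN conjunct2, THEN conjunct2])
  from h have "polyhedron (iota ` s)" by (rule conjunct2[THEN conjunct2, THEN conjunct2])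
  then show "convex (iota ` s)" by (rule polyhedron_imp_convex)
qed

lemma EC_face:
  assumes "eucl_complex iota P" "s \<in> P" "is_face iota t s" "t \<noteq> {}"
  shows "t \<in> P"
  using EC_parts(4)[OF assms(1)] assms(2-4) by blast

lemma EC_int:
  assumes "eucl_complex iota P" "s \<in> P" "s' \<in> P"
  shows "is_face iota (s \<inter> s') s"
  using EC_parts(5)[OF assms(1)] assms(2-3) by blast

lemma EC_cover:
  assumes "eucl_complex iota P"
  shows "\<exists>s\<in>P. x \<in> s"
  using EC_parts(1)[OF assms(1)] by blast

lemma EC_locfin:
  assumes "eucl_complex iota P"
  obtains W where "open W" "x \<in> W" "finite {s\<in>P. s \<inter> W \<noteq> {}}"
  using EC_parts(2)[OF assms(1)] by blast

lemma EC_star_finite: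
  assumes "eucl_complex iota P" "x \<in> t"
  shows "finite {s\<in>P. t \<subseteq> s}"
proof -
  obtain W where W: "open W" "x \<in> W" "finite {s\<in>P. s \<inter> W \<noteq> {}}" using EC_locfin[OF assms(1)] by blast
  have "{s\<in>P. t \<subseteq> s} \<subseteq> {s\<in>P. s \<inter> W \<noteq> {}}" using W(2) assms(2) by blast
  then show ?thesis using W(3) finite_subset by blast
qed

lemma is_face_trans:
  "is_face iota a b \<Longrightarrow> is_face iota b c \<Longrightarrow> is_face iota a c"
  unfolding is_face_def using face_of_trans by blast

lemma cell_open_image:
  assumes "eucl_complex iota P" "s \<in> P" "open Q0"
  obtains Q1 where "open Q1" "iota ` (s \<inter> Q0) = iota ` s \<inter> Q1"
proof -
  obtain g where h: "homeomorphism s (iota ` s) iota g" using EC_cell(3)[OF assms(1,2)] by blast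
  have "openin (top_of_set s) (s \<inter> Q0)" using assms(3) by (simp add: openin_open_Int)
  then have "openin (top_of_set (iota ` s)) (iota ` (s \<inter> Q0))" by (rule homeomorphism_imp_open_map[OF h])
  then show ?thesis using that unfolding openin_open by blast
qed

lemma aff_hull_cell_open:
  assumes "eucl_complex iota P" "s \<in> P" "open Q0" "s \<inter> Q0 \<noteq> {}"
  shows "affine hull (iota ` (s \<inter> Q0)) = affine hull (iota ` s)"
proof -
  obtain Q1 where Q1: "open Q1" "iota ` (s \<inter> Q0) = iota ` s \<inter> Q1" using cell_open_image[OF assms(1-3)] by blast
  have "iota ` s \<inter> Q1 \<noteq> {}" using Q1(2) assms(4) by blast
  then show ?thesis using affine_hull_convex_Int_open[OF EC_cell(5)[OF assms(1,2)] Q1(1)] Q1(2) by simp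
qed

lemma lin_agree:
  assumes "eucl_complex iota P" "t \<in> P" "open V" "t \<inter> V \<noteq> {}" "t \<subseteq> s"
    and l1: "linear l1" "\<And>x. x \<in> s \<inter> V \<Longrightarrow> f x = l1 (iota x)"
    and l2: "linear l2" "\<And>x. x \<in> t \<inter> V \<Longrightarrow> f x = l2 (iota x)"
    and v: "v \<in> dirS (iota ` t)"
  shows "l1 v = l2 v"
proof -
  let ?G = "iota ` (t \<inter> V)"
  have agG: "l1 y = l2 y" if "y \<in> ?G" for y
  proof -
    from that obtain x where x: "x \<in> t \<inter> V" "y = iota x" by blast
    then have "x \<in> s \<inter> V" using assms(5) by blast
    then show ?thesis using l1(2) l2(2) x by metis
  qed
  have "linear (\<lambda>y. l1 y - l2 y)" using l1(1) l2(1) by (rule linear_compose_sub)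
  then have "subspace {y. l1 y - l2 y = 0}" by (rule real_vector.linear_subspace_kernel)
  then have sub: "subspace {y. l1 y = l2 y}" by simp
  have sp: "span ?G \<subseteq> {y. l1 y = l2 y}"
    by (rule span_minimal[OF _ sub]) (use agG in blast)
  have "iota ` t \<subseteq> affine hull (iota ` t)" by (rule hull_subset)
  also have "\<dots> = affine hull ?G" using aff_hull_cell_open[OF assms(1-4)] by simp
  also have "\<dots> \<subseteq> span ?G" by (rule affine_hull_subset_span)
  finally have tG: "iota ` t \<subseteq> span ?G" .
  have "{y - x | y x. y \<in> iota ` t \<and> x \<in> iota ` t} \<subseteq> span ?G"
  proof
    fix w assume "w \<in> {y - x | y x. y \<in> iota ` t \<and> x \<in> iota ` t}"
    then obtain y x where w: "w = y - x" "y \<in> iota ` t" "x \<in> iota ` t" by blast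
    then have "y \<in> span ?G" "x \<in> span ?G" using tG by auto
    then show "w \<in> span ?G" unfolding w(1) by (rule span_diff)
  qed
  then have "dirS (iota ` t) \<subseteq> span ?G"
    unfolding dirS_def by (rule span_minimal) simp
  then show ?thesis using v sp by blast
qed



lemma lin_part_props:
  assumes "pw_affine_on iota P V f" "s \<in> P" "s \<inter> V \<noteq> {}"
  shows "linear (lin_part iota V f s)" "\<And>x. x \<in> s \<inter> V \<Longrightarrow> f x = lin_part iota V f s (iota x)"
proof -
  have "\<exists>l::'b \<Rightarrow> real. linear l \<and> (\<forall>x\<in>s \<inter> V. f x = l (iota x))"
    using assms unfolding pw_affine_on_def by blast
  then have "linear (lin_part iota V f s) \<and> (\<forall>x\<in>s \<inter> V. f x = lin_part iota V f s (iota x))"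
    unfolding lin_part_def by (rule someI_ex)
  then show "linear (lin_part iota V f s)" "\<And>x. x \<in> s \<inter> V \<Longrightarrow> f x = lin_part iota V f s (iota x)"
    by blast+
qed

lemma restrD:
  assumes "s \<in> restr iota P V k"
  shows "s \<in> P" "s \<inter> V \<noteq> {}" "aff_dim (iota ` s) = k"
  using assms by (auto simp: restr_def cell_dim_def)

lemma is_faceD:
  assumes "is_face iota t s"
  shows "t \<subseteq> s" "(iota ` t) face_of (iota ` s)"
  using assms by (auto simp: is_face_def)


lemma reindex_facets:
  assumes EC: "eucl_complex iota P" and \<sigma>: "\<sigma> \<in> restr iota P V k" and \<rho>: "\<rho> \<in> restr iota P V (k - 2)"
    and f\<rho>\<sigma>: "is_face iota \<rho> \<sigma>"
  shows "(\<Sum>\<tau>\<in>{\<tau> \<in> restr iota P V (k - 1). is_face iota \<rho> \<tau> \<and> is_face iota \<tau> \<sigma>}. h (iota ` \<tau>))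
       = (\<Sum>T\<in>{T. T face_of (iota ` \<sigma>) \<and> iota ` \<rho> \<subseteq> T \<and> aff_dim (iota ` \<sigma>) = aff_dim T + 1}. h T)"
proof -
  let ?A = "{\<tau> \<in> restr iota P V (k - 1). is_face iota \<rho> \<tau> \<and> is_face iota \<tau> \<sigma>}"
  let ?F = "{T. T face_of (iota ` \<sigma>) \<and> iota ` \<rho> \<subseteq> T \<and> aff_dim (iota ` \<sigma>) = aff_dim T + 1}"
  note S = restrD[OF \<sigma>] and R = restrD[OF \<rho>]
  have inj: "inj_on iota \<sigma>" using EC_cell(2)[OF EC S(1)] .
  have injA: "inj_on ((`) iota) ?A"
  proof (rule inj_onI)
    fix a b assume ab: "a \<in> ?A" "b \<in> ?A" "iota ` a = iota ` b"
    have "a \<subseteq> \<sigma>" using ab(1) is_faceD(1)[of iota a \<sigma>] by simp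
    moreover have "b \<subseteq> \<sigma>" using ab(2) is_faceD(1)[of iota b \<sigma>] by simp
    ultimately show "a = b" using inj_on_image_eq_iff[OF inj] ab(3) by metis
  qed
  have img: "(`) iota ` ?A = ?F"
  proof
    show "(`) iota ` ?A \<subseteq> ?F"
    proof
      fix T assume "T \<in> (`) iota ` ?A"
      then obtain \<tau> where \<tau>: "\<tau> \<in> ?A" "T = iota ` \<tau>" by blast
      then have a: "\<tau> \<in> restr iota P V (k - 1)" and b: "is_face iota \<rho> \<tau>" and c: "is_face iota \<tau> \<sigma>"
        by auto
      have "T face_of (iota ` \<sigma>)" using is_faceD(2)[OF c] \<tau>(2) by simp
      moreover have "iota ` \<rho> \<subseteq> T" using is_faceD(1)[OF b] \<tau>(2) by blast
      moreover have "aff_dim (iota ` \<sigma>) = aff_dim T + 1" using restrD(3)[OF a] S(3) \<tau>(2) by simp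
      ultimately show "T \<in> ?F" by blast
    qed
    show "?F \<subseteq> (`) iota ` ?A"
    proof
      fix T assume T: "T \<in> ?F"
      define \<tau> where "\<tau> = {x \<in> \<sigma>. iota x \<in> T}"
      have Ts: "T \<subseteq> iota ` \<sigma>" using T face_of_imp_subset by blast
      have iT: "iota ` \<tau> = T" using Ts by (auto simp: \<tau>_def)
      have \<rho>\<sigma>: "\<rho> \<subseteq> \<sigma>" using is_faceD(1)[OF f\<rho>\<sigma>] .
      have \<rho>\<tau>: "\<rho> \<subseteq> \<tau>" using \<rho>\<sigma> T by (auto simp: \<tau>_def)
      have ft: "is_face iota \<tau> \<sigma>" using T iT by (auto simp: is_face_def \<tau>_def)
      have "\<tau> \<noteq> {}" using \<rho>\<tau> R(2) by blast
      then have tP: "\<tau> \<in> P" using EC_face[OF EC S(1) ft] by blast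
      have "\<tau> \<inter> V \<noteq> {}" using \<rho>\<tau> R(2) by blast
      moreover have "cell_dim iota \<tau> = k - 1" using T iT S(3) by (simp add: cell_dim_def)
      ultimately have tr: "\<tau> \<in> restr iota P V (k - 1)" using tP by (simp add: restr_def)
      have "(iota ` \<rho>) face_of T"
        using face_of_subset[OF is_faceD(2)[OF f\<rho>\<sigma>]] T Ts by blast
      then have "is_face iota \<rho> \<tau>" using \<rho>\<tau> iT by (simp add: is_face_def)
      then have "\<tau> \<in> ?A" using tr ft by simp
      then show "T \<in> (`) iota ` ?A" using iT by blast
    qed
  qed
  show ?thesis
    using sum.reindex[OF injA, of h] img by simp
qed


lemma mult_minkowski:
  assumes EC: "eucl_complex iota P" and V: "open V" and pw: "pw_affine_on iota P V f"
    and mk: "minkowski iota P V k c"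
  shows "minkowski iota P V (k - 1) (mult_weight iota P V k f c)"
  unfolding minkowski_def
proof
  fix \<rho> assume \<rho>: "\<rho> \<in> restr iota P V (k - 1 - 1)"
  then have \<rho>': "\<rho> \<in> restr iota P V (k - 2)" by (simp add: algebra_simps)
  note R = restrD[OF \<rho>']
  obtain x0 where x0: "x0 \<in> \<rho>" using R(2) by blast
  define A where "A = {\<tau> \<in> restr iota P V (k - 1). is_face iota \<rho> \<tau>}"
  define B where "B = {\<sigma> \<in> restr iota P V k. is_face iota \<rho> \<sigma>}"
  define St where "St = (\<lambda>\<tau>. {\<sigma> \<in> restr iota P V k. is_face iota \<tau> \<sigma>})"
  define L where "L = (\<lambda>\<sigma>. lin_part iota V f \<sigma>)"
  define n where "n = (\<lambda>\<sigma> \<tau>. normal_vec iota \<sigma> \<tau>)"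
  define u where "u = (\<lambda>\<tau>. normal_vec iota \<tau> \<rho>)"
  define w where "w = mult_weight iota P V k f c"
  have w_eq: "w \<tau> = - (\<Sum>\<sigma>\<in>St \<tau>. c \<sigma> * L \<sigma> (n \<sigma> \<tau>))" for \<tau>
    by (simp add: w_def mult_weight_def St_def L_def n_def)
  have finA: "finite A"
    by (rule finite_subset[OF _ EC_star_finite[OF EC x0]]) (auto simp: A_def restr_def is_face_def)
  have finB: "finite B"
    by (rule finite_subset[OF _ EC_star_finite[OF EC x0]]) (auto simp: B_def restr_def is_face_def)
  have StB: "St \<tau> = {\<sigma> \<in> B. is_face iota \<tau> \<sigma>}" if "\<tau> \<in> A" for \<tau>
    using that is_face_trans by (auto simp: St_def A_def B_def)
  have Adata: "convex (iota ` \<tau>) \<and> (iota ` \<rho>) face_of (iota ` \<tau>) \<and> iota ` \<rho> \<noteq> {} \<and>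
      aff_dim (iota ` \<tau>) = aff_dim (iota ` \<rho>) + 1 \<and> \<tau> \<in> P \<and> \<tau> \<inter> V \<noteq> {} \<and> \<tau> \<in> restr iota P V (k - 1)"
    if "\<tau> \<in> A" for \<tau>
  proof -
    have t: "\<tau> \<in> restr iota P V (k - 1)" "is_face iota \<rho> \<tau>" using that by (auto simp: A_def)
    note T = restrD[OF t(1)]
    show ?thesis using T EC_cell(5)[OF EC T(1)] is_faceD(2)[OF t(2)] R(2) R(3) t(1) by auto
  qed
  have X1: "(\<Sum>\<sigma>\<in>St \<tau>. c \<sigma> * ((z \<bullet> n \<sigma> \<tau>) * L \<sigma> (u \<tau>))) = 0" if "\<tau> \<in> A" for \<tau> z
  proof -
    note D = Adata[OF that]
    have D1: "convex (iota ` \<tau>)" "(iota ` \<rho>) face_of (iota ` \<tau>)" "iota ` \<rho> \<noteq> {}"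
       "aff_dim (iota ` \<tau>) = aff_dim (iota ` \<rho>) + 1" "\<tau> \<in> P" "\<tau> \<inter> V \<noteq> {}" "\<tau> \<in> restr iota P V (k - 1)"
      using D by blast+
    have uin: "u \<tau> \<in> dirS (iota ` \<tau>)"
      using gnormal_props(2)[OF D1(1-4)] by (simp add: u_def normal_vec_gnormal)
    have agree: "L \<sigma> (u \<tau>) = L \<tau> (u \<tau>)" if "\<sigma> \<in> St \<tau>" for \<sigma>
    proof -
      have s: "\<sigma> \<in> restr iota P V k" "is_face iota \<tau> \<sigma>" using that by (auto simp: St_def)
      note Sg = restrD[OF s(1)]
      show ?thesis
        unfolding L_def
        by (rule lin_agree[OF EC D1(5) V D1(6) is_faceD(1)[OF s(2)]
              lin_part_props(1)[OF pw Sg(1) Sg(2)] lin_part_props(2)[OF pw Sg(1) Sg(2)]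
              lin_part_props(1)[OF pw D1(5) D1(6)] lin_part_props(2)[OF pw D1(5) D1(6)] uin])
    qed
    have "(\<Sum>\<sigma>\<in>St \<tau>. c \<sigma> * ((z \<bullet> n \<sigma> \<tau>) * L \<sigma> (u \<tau>))) = (\<Sum>\<sigma>\<in>St \<tau>. L \<tau> (u \<tau>) * (z \<bullet> (c \<sigma> *\<^sub>R n \<sigma> \<tau>)))"
      by (rule sum.cong) (simp_all add: agree)
    also have "\<dots> = L \<tau> (u \<tau>) * (z \<bullet> (\<Sum>\<sigma>\<in>St \<tau>. c \<sigma> *\<^sub>R n \<sigma> \<tau>))"
      by (simp add: sum_distrib_left inner_sum_right)
    also have "(\<Sum>\<sigma>\<in>St \<tau>. c \<sigma> *\<^sub>R n \<sigma> \<tau>) = 0"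
      using mk D1(7) unfolding minkowski_def St_def n_def by blast
    finally show ?thesis by simp
  qed
  have X2: "(\<Sum>\<tau>\<in>A. \<Sum>\<sigma>\<in>St \<tau>. c \<sigma> * (L \<sigma> (n \<sigma> \<tau>) * (z \<bullet> u \<tau>) - (z \<bullet> n \<sigma> \<tau>) * L \<sigma> (u \<tau>))) = 0" for z
  proof -
    have "(\<Sum>\<tau>\<in>A. \<Sum>\<sigma>\<in>St \<tau>. c \<sigma> * (L \<sigma> (n \<sigma> \<tau>) * (z \<bullet> u \<tau>) - (z \<bullet> n \<sigma> \<tau>) * L \<sigma> (u \<tau>)))
       = (\<Sum>\<tau>\<in>A. \<Sum>\<sigma>\<in>{\<sigma> \<in> B. is_face iota \<tau> \<sigma>}. c \<sigma> * (L \<sigma> (n \<sigma> \<tau>) * (z \<bullet> u \<tau>) - (z \<bullet> n \<sigma> \<tau>) * L \<sigma> (u \<tau>)))"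
      by (rule sum.cong) (simp_all add: StB)
    also have "\<dots> = (\<Sum>\<sigma>\<in>B. \<Sum>\<tau>\<in>{\<tau> \<in> A. is_face iota \<tau> \<sigma>}. c \<sigma> * (L \<sigma> (n \<sigma> \<tau>) * (z \<bullet> u \<tau>) - (z \<bullet> n \<sigma> \<tau>) * L \<sigma> (u \<tau>)))"
      by (rule sum.swap_restrict[OF finA finB])
    also have "\<dots> = (\<Sum>\<sigma>\<in>B. 0)"
    proof (rule sum.cong[OF refl])
      fix \<sigma> assume "\<sigma> \<in> B"
      then have s: "\<sigma> \<in> restr iota P V k" "is_face iota \<rho> \<sigma>" by (auto simp: B_def)
      note Sg = restrD[OF s(1)]
      have lin: "linear (L \<sigma>)" using lin_part_props(1)[OF pw Sg(1) Sg(2)] by (simp add: L_def)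
      have dims: "aff_dim (iota ` \<sigma>) = aff_dim (iota ` \<rho>) + 2" using Sg(3) R(3) by simp
      have "{\<tau> \<in> A. is_face iota \<tau> \<sigma>} = {\<tau> \<in> restr iota P V (k - 1). is_face iota \<rho> \<tau> \<and> is_face iota \<tau> \<sigma>}"
        by (auto simp: A_def)
      then have "(\<Sum>\<tau>\<in>{\<tau> \<in> A. is_face iota \<tau> \<sigma>}. c \<sigma> * (L \<sigma> (n \<sigma> \<tau>) * (z \<bullet> u \<tau>) - (z \<bullet> n \<sigma> \<tau>) * L \<sigma> (u \<tau>)))
          = c \<sigma> * (\<Sum>\<tau>\<in>{\<tau> \<in> restr iota P V (k - 1). is_face iota \<rho> \<tau> \<and> is_face iota \<tau> \<sigma>}.
               (\<lambda>T. L \<sigma> (gnormal (iota ` \<sigma>) T) * (z \<bullet> gnormal T (iota ` \<rho>)) - (z \<bullet> gnormal (iota ` \<sigma>) T) * L \<sigma> (gnormal T (iota ` \<rho>))) (iota ` \<tau>))"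
        by (simp add: sum_distrib_left n_def u_def normal_vec_gnormal)
      also have "\<dots> = c \<sigma> * (\<Sum>T\<in>{T. T face_of (iota ` \<sigma>) \<and> iota ` \<rho> \<subseteq> T \<and> aff_dim (iota ` \<sigma>) = aff_dim T + 1}.
               L \<sigma> (gnormal (iota ` \<sigma>) T) * (z \<bullet> gnormal T (iota ` \<rho>)) - (z \<bullet> gnormal (iota ` \<sigma>) T) * L \<sigma> (gnormal T (iota ` \<rho>)))"
        by (subst reindex_facets[OF EC s(1) \<rho>' s(2)]) (rule refl)
      also have "\<dots> = 0"
        using codim2_identity(2)[OF EC_cell(4)[OF EC Sg(1)] is_faceD(2)[OF s(2)] _ dims lin] R(2) by auto
      finally show "(\<Sum>\<tau>\<in>{\<tau> \<in> A. is_face iota \<tau> \<sigma>}. c \<sigma> * (L \<sigma> (n \<sigma> \<tau>) * (z \<bullet> u \<tau>) - (z \<bullet> n \<sigma> \<tau>) * L \<sigma> (u \<tau>))) = 0" .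
    qed
    finally show ?thesis by simp
  qed
  define vec where "vec = (\<Sum>\<tau>\<in>A. w \<tau> *\<^sub>R u \<tau>)"
  have "vec \<bullet> vec = (\<Sum>\<tau>\<in>A. w \<tau> * (vec \<bullet> u \<tau>))"
    by (simp add: vec_def[of] inner_sum_right)
  also have "\<dots> = - (\<Sum>\<tau>\<in>A. \<Sum>\<sigma>\<in>St \<tau>. c \<sigma> * (L \<sigma> (n \<sigma> \<tau>) * (vec \<bullet> u \<tau>)))"
    by (simp add: w_eq sum_negf sum_distrib_left mult_ac)
  also have "(\<Sum>\<tau>\<in>A. \<Sum>\<sigma>\<in>St \<tau>. c \<sigma> * (L \<sigma> (n \<sigma> \<tau>) * (vec \<bullet> u \<tau>)))
      = (\<Sum>\<tau>\<in>A. \<Sum>\<sigma>\<in>St \<tau>. c \<sigma> * (L \<sigma> (n \<sigma> \<tau>) * (vec \<bullet> u \<tau>) - (vec \<bullet> n \<sigma> \<tau>) * L \<sigma> (u \<tau>)))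
        + (\<Sum>\<tau>\<in>A. \<Sum>\<sigma>\<in>St \<tau>. c \<sigma> * ((vec \<bullet> n \<sigma> \<tau>) * L \<sigma> (u \<tau>)))"
    by (simp add: sum.distrib[symmetric] algebra_simps)
  also have "\<dots> = 0" using X2[of vec] X1[of _ vec] by simp
  finally have "vec \<bullet> vec = 0" by simp
  then have "vec = 0" by simp
  then show "(\<Sum>s\<in>{s \<in> restr iota P V (k - 1). is_face iota \<rho> s}.
           mult_weight iota P V k f c s *\<^sub>R normal_vec iota s \<rho>) = 0"
    by (simp add: vec_def A_def w_def u_def)
qed


lemma not_covered:
  fixes S :: "'n::euclidean_space set"
  assumes "finite CC"
  shows "openin (top_of_set (affine hull S)) G \<Longrightarrow> G \<noteq> {} \<Longrightarrow> (\<forall>C\<in>CC. aff_dim C < aff_dim S)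
         \<Longrightarrow> \<exists>g\<in>G. g \<notin> \<Union>CC"
  using assms
proof (induction CC arbitrary: G rule: finite_induct)
  case empty
  then show ?case by auto
next
  case (insert C CC)
  let ?G' = "G \<inter> - (affine hull C)"
  have op: "openin (top_of_set (affine hull S)) ?G'"
    using openin_Int_open[OF insert.prems(1)] closed_affine_hull[of C] by (simp add: open_Compl)
  have "?G' \<noteq> {}"
  proof
    assume "?G' = {}"
    then have "G \<subseteq> affine hull C" by blast
    then have "affine hull G \<subseteq> affine hull C" by (simp add: hull_minimal)
    then have "affine hull S \<subseteq> affine hull C" using affine_hull_openin[OF insert.prems(1,2)] by simp
    then have "aff_dim S \<le> aff_dim C" by (metis aff_dim_affine_hull aff_dim_subset)
    then show False using insert.prems(3) by auto
  qed
  then obtain g where "g \<in> ?G'" "g \<notin> \<Union>CC" using insert.IH[OF op] insert.prems(3) by blast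
  moreover have "C \<subseteq> affine hull C" by (rule hull_subset)
  ultimately show ?case by blast
qed

lemma unique_cell:
  assumes EC: "eucl_complex iota P" and s1: "s1 \<in> restr iota P V k" and s2: "s2 \<in> restr iota P V k"
    and F: "F \<subseteq> s1" "F \<subseteq> s2" "aff_dim (iota ` F) = k"
  shows "s1 = s2"
proof -
  have sub: "a \<subseteq> b" if a: "a \<in> restr iota P V k" and b: "b \<in> restr iota P V k" and Fa: "F \<subseteq> a" "F \<subseteq> b" for a b
  proof (rule ccontr)
    assume "\<not> a \<subseteq> b"
    then have ne: "a \<inter> b \<noteq> a" by blast
    note A = restrD[OF a] and B = restrD[OF b]
    have f: "(iota ` (a \<inter> b)) face_of (iota ` a)" using is_faceD(2)[OF EC_int[OF EC A(1) B(1)]] .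
    have "iota ` (a \<inter> b) \<noteq> iota ` a"
      using inj_on_image_eq_iff[OF EC_cell(2)[OF EC A(1)], of "a \<inter> b" a] ne by blast
    then have "aff_dim (iota ` (a \<inter> b)) < aff_dim (iota ` a)"
      using face_of_aff_dim_lt[OF EC_cell(5)[OF EC A(1)] f] by blast
    moreover have "aff_dim (iota ` F) \<le> aff_dim (iota ` (a \<inter> b))"
      using Fa by (intro aff_dim_subset image_mono) blast
    ultimately show False using A(3) F(3) by simp
  qed
  show ?thesis using sub[OF s1 s2 F(1,2)] sub[OF s2 s1 F(2,1)] by blast
qed

lemma pullback_cell:
  assumes EC: "eucl_complex iota P" and s: "s \<in> restr iota P V k" and F: "F \<subseteq> s" "aff_dim (iota ` F) = k"
  shows "pullback iota P V k c F = c s"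
proof -
  have "(THE s'. s' \<in> restr iota P V k \<and> F \<subseteq> s') = s"
  proof (rule the_equality)
    show "s \<in> restr iota P V k \<and> F \<subseteq> s" using s F(1) by simp
    fix x assume x: "x \<in> restr iota P V k \<and> F \<subseteq> x"
    then have "x \<in> restr iota P V k" "F \<subseteq> x" by auto
    then show "x = s" using unique_cell[OF EC _ s _ F(1) F(2)] by blast
  qed
  moreover have "\<exists>s\<in>restr iota P V k. F \<subseteq> s" using s F(1) by blast
  ultimately show ?thesis by (simp add: pullback_def)
qed

lemma pullback_nonneg:
  assumes EC: "eucl_complex iota P" and pos: "positive_weight iota P V k c" and F: "aff_dim (iota ` F) = k"
  shows "pullback iota P V k c F \<ge> 0"
proof (cases "\<exists>s\<in>restr iota P V k. F \<subseteq> s")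
  case True
  then obtain s where "s \<in> restr iota P V k" "F \<subseteq> s" by blast
  then have "pullback iota P V k c F = c s" using pullback_cell[OF EC _ _ F] by blast
  then show ?thesis using pos \<open>s \<in> restr iota P V k\<close> by (simp add: positive_weight_def)
next
  case False
  then show ?thesis by (simp add: pullback_def)
qed

lemma complex_on_EC: "complex_on iota P0 P \<Longrightarrow> eucl_complex iota P"
  by (simp add: complex_on_def)

lemma exists_subcell:
  assumes EC': "eucl_complex iota P'" and EC3: "eucl_complex iota P3" and sd: "subdivides P3 P'"
    and V: "open V" and \<sigma>: "\<sigma> \<in> restr iota P' V k"
  shows "\<exists>E\<in>restr iota P3 V k. E \<subseteq> \<sigma>"
proof -
  note S = restrD[OF \<sigma>]
  obtain x0 where x0: "x0 \<in> \<sigma>" "x0 \<in> V" using S(2) by blast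
  obtain W where W: "open W" "x0 \<in> W" "finite {s\<in>P3. s \<inter> W \<noteq> {}}" using EC_locfin[OF EC3] by blast
  define Q where "Q = W \<inter> V"
  have Q: "open Q" "x0 \<in> Q" using W V x0 by (auto simp: Q_def)
  obtain Q1 where Q1: "open Q1" "iota ` (\<sigma> \<inter> Q) = iota ` \<sigma> \<inter> Q1" using cell_open_image[OF EC' S(1) Q(1)] by blast
  define G where "G = rel_interior (iota ` \<sigma>) \<inter> Q1"
  have opG: "openin (top_of_set (affine hull (iota ` \<sigma>))) G"
    unfolding G_def by (rule openin_Int_open[OF openin_rel_interior Q1(1)])
  have "x0 \<in> \<sigma> \<inter> Q" using x0 Q(2) by simp
  then have "iota x0 \<in> iota ` (\<sigma> \<inter> Q)" by (rule imageI)
  then have "iota x0 \<in> Q1" unfolding Q1(2) by simp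
  moreover have "iota x0 \<in> closure (rel_interior (iota ` \<sigma>))"
  proof -
    have "iota x0 \<in> iota ` \<sigma>" using x0(1) by (rule imageI)
    then have "iota x0 \<in> closure (iota ` \<sigma>)" by (rule subsetD[OF closure_subset])
    moreover have "closure (rel_interior (iota ` \<sigma>)) = closure (iota ` \<sigma>)"
      by (rule convex_closure_rel_interior[OF EC_cell(5)[OF EC' S(1)]])
    ultimately show ?thesis by (simp only:)
  qed
  then have "Q1 \<inter> closure (rel_interior (iota ` \<sigma>)) \<noteq> {}" using \<open>iota x0 \<in> Q1\<close> by blast
  moreover have "(Q1 \<inter> closure (rel_interior (iota ` \<sigma>)) = {}) = (Q1 \<inter> rel_interior (iota ` \<sigma>) = {})"
    by (rule open_Int_closure_eq_empty[OF Q1(1)])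
  ultimately have "Q1 \<inter> rel_interior (iota ` \<sigma>) \<noteq> {}" by (simp only:) simp
  then have Gne: "G \<noteq> {}" unfolding G_def by (simp add: Int_commute)
  define CC where "CC = {iota ` (s \<inter> \<sigma>) | s. s \<in> {s\<in>P3. s \<inter> W \<noteq> {}} \<and> aff_dim (iota ` (s \<inter> \<sigma>)) < k}"
  have "CC \<subseteq> (\<lambda>s. iota ` (s \<inter> \<sigma>)) ` {s\<in>P3. s \<inter> W \<noteq> {}}" unfolding CC_def by blast
  then have "finite CC" by (rule finite_subset) (rule finite_imageI[OF W(3)])
  moreover have "\<forall>C\<in>CC. aff_dim C < aff_dim (iota ` \<sigma>)"
  proof
    fix C assume "C \<in> CC"
    then obtain s where "C = iota ` (s \<inter> \<sigma>)" "aff_dim (iota ` (s \<inter> \<sigma>)) < k" unfolding CC_def by blast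
    then show "aff_dim C < aff_dim (iota ` \<sigma>)" using S(3) by simp
  qed
  ultimately obtain g where g: "g \<in> G" "g \<notin> \<Union>CC" using not_covered[OF _ opG Gne] by blast
  have "g \<in> iota ` \<sigma> \<inter> Q1" using g(1) rel_interior_subset by (auto simp: G_def)
  then have "g \<in> iota ` (\<sigma> \<inter> Q)" unfolding Q1(2) .
  then obtain y where y: "y \<in> \<sigma> \<inter> Q" "g = iota y" by (rule imageE) simp
  then have y: "y \<in> \<sigma>" "y \<in> Q" "g = iota y" by auto
  obtain s where s: "s \<in> P3" "y \<in> s" using EC_cover[OF EC3] by blast
  have sW: "s \<inter> W \<noteq> {}" using s(2) y(2) by (auto simp: Q_def)
  have "y \<in> s \<inter> \<sigma>" using y s by simp
  then have gi: "g \<in> iota ` (s \<inter> \<sigma>)" unfolding y(3) by (rule imageI)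
  have dimE: "aff_dim (iota ` (s \<inter> \<sigma>)) \<ge> k"
  proof (rule ccontr)
    assume "\<not> aff_dim (iota ` (s \<inter> \<sigma>)) \<ge> k"
    then have "iota ` (s \<inter> \<sigma>) \<in> CC" using s(1) sW unfolding CC_def by auto
    then show False using g(2) gi by blast
  qed
  obtain s' where s': "s' \<in> P'" "s \<subseteq> s'" using sd s(1) by (auto simp: subdivides_def)
  have inj': "inj_on iota s'" using EC_cell(2)[OF EC' s'(1)] .
  have f1: "(iota ` (s' \<inter> \<sigma>)) face_of (iota ` s')" using is_faceD(2)[OF EC_int[OF EC' s'(1) S(1)]] .
  have "(iota ` (s' \<inter> \<sigma>) \<inter> iota ` s) face_of (iota ` s' \<inter> iota ` s)"
    using face_of_slice[OF f1 EC_cell(5)[OF EC3 s(1)]] .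
  moreover have "iota ` (s' \<inter> \<sigma>) \<inter> iota ` s = iota ` (s \<inter> \<sigma>)"
  proof -
    have e: "(s' \<inter> \<sigma>) \<inter> s = s \<inter> \<sigma>" using s'(2) by blast
    have "s' \<inter> \<sigma> \<subseteq> s'" by blast
    from inj_on_image_Int[OF inj' this s'(2)] e show ?thesis by simp
  qed
  moreover have "iota ` s' \<inter> iota ` s = iota ` s" using image_mono[OF s'(2)] by (rule Int_absorb1)
  ultimately have "(iota ` (s \<inter> \<sigma>)) face_of (iota ` s)" by simp
  then have fE: "is_face iota (s \<inter> \<sigma>) s" by (simp add: is_face_def)
  have "s \<inter> \<sigma> \<noteq> {}" using \<open>y \<in> s \<inter> \<sigma>\<close> by blast
  then have EP: "s \<inter> \<sigma> \<in> P3" using EC_face[OF EC3 s(1) fE] by blast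
  have "aff_dim (iota ` (s \<inter> \<sigma>)) \<le> aff_dim (iota ` \<sigma>)" by (intro aff_dim_subset image_mono) blast
  then have "cell_dim iota (s \<inter> \<sigma>) = k" using dimE S(3) by (simp add: cell_dim_def)
  moreover have "(s \<inter> \<sigma>) \<inter> V \<noteq> {}" using \<open>y \<in> s \<inter> \<sigma>\<close> y(2) by (auto simp: Q_def)
  ultimately have "s \<inter> \<sigma> \<in> restr iota P3 V k" using EP by (simp add: restr_def)
  then show ?thesis by blast
qed

lemma same_cycle_pos:
  assumes EC: "eucl_complex iota P" and EC': "eucl_complex iota P'" and V: "open V"
    and pos: "positive_weight iota P V k c" and sc: "same_cycle iota P0 V k P c P' c'"
    and \<sigma>: "\<sigma> \<in> restr iota P' V k"
  shows "c' \<sigma> \<ge> 0"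
proof -
  obtain P3 where P3: "complex_on iota P0 P3" "subdivides P3 P" "subdivides P3 P'"
    "\<forall>s\<in>restr iota P3 V k. pullback iota P V k c s = pullback iota P' V k c' s"
    using sc unfolding same_cycle_def by blast
  have EC3: "eucl_complex iota P3" using complex_on_EC[OF P3(1)] .
  obtain E where E: "E \<in> restr iota P3 V k" "E \<subseteq> \<sigma>" using exists_subcell[OF EC' EC3 P3(3) V \<sigma>] by blast
  have dE: "aff_dim (iota ` E) = k" using restrD(3)[OF E(1)] .
  have "c' \<sigma> = pullback iota P' V k c' E" using pullback_cell[OF EC' \<sigma> E(2) dE] by simp
  also have "\<dots> = pullback iota P V k c E" using P3(4) E(1) by simp
  also have "\<dots> \<ge> 0" using pullback_nonneg[OF EC pos dE] .
  finally show ?thesis .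
qed



lemma uniform_eps:
  fixes Q :: "'a \<Rightarrow> real \<Rightarrow> bool"
  assumes "finite S"
  shows "(\<forall>s\<in>S. \<exists>d>0. \<forall>t. 0 \<le> t \<and> t \<le> d \<longrightarrow> Q s t) \<Longrightarrow> \<exists>e>0. \<forall>s\<in>S. \<forall>t. 0 \<le> t \<and> t \<le> e \<longrightarrow> Q s t"
  using assms
proof (induction S rule: finite_induct)
  case empty
  then show ?case by (intro exI[of _ 1]) simp
next
  case (insert x F)
  obtain e where e: "e > 0" "\<forall>s\<in>F. \<forall>t. 0 \<le> t \<and> t \<le> e \<longrightarrow> Q s t" using insert by blast
  obtain d where d: "d > 0" "\<forall>t. 0 \<le> t \<and> t \<le> d \<longrightarrow> Q x t" using insert.prems by blast
  show ?case
  proof (rule exI[of _ "min e d"], intro conjI ballI allI impI)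
    show "min e d > 0" using e(1) d(1) by simp
    fix s t assume "s \<in> insert x F" "0 \<le> t \<and> t \<le> min e d"
    then show "Q s t" using e(2) d(2) by auto
  qed
qed

lemma relint_point:
  assumes EC: "eucl_complex iota P" and t: "t \<in> P" and Q: "open Q" and ne: "t \<inter> Q \<noteq> {}"
  obtains xp where "xp \<in> t" "xp \<in> Q" "iota xp \<in> rel_interior (iota ` t)"
proof -
  obtain x0 where x0: "x0 \<in> t" "x0 \<in> Q" using ne by blast
  obtain Q1 where Q1: "open Q1" "iota ` (t \<inter> Q) = iota ` t \<inter> Q1" using cell_open_image[OF EC t Q] by blast
  have "x0 \<in> t \<inter> Q" using x0 by simp
  then have "iota x0 \<in> iota ` (t \<inter> Q)" by (rule imageI)
  then have "iota x0 \<in> Q1" unfolding Q1(2) by simp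
  have "iota x0 \<in> closure (rel_interior (iota ` t))"
  proof -
    have "iota x0 \<in> iota ` t" using x0(1) by (rule imageI)
    then have "iota x0 \<in> closure (iota ` t)" by (rule subsetD[OF closure_subset])
    moreover have "closure (rel_interior (iota ` t)) = closure (iota ` t)"
      by (rule convex_closure_rel_interior[OF EC_cell(5)[OF EC t]])
    ultimately show ?thesis by (simp only:)
  qed
  then have "Q1 \<inter> closure (rel_interior (iota ` t)) \<noteq> {}" using \<open>iota x0 \<in> Q1\<close> by blast
  moreover have "(Q1 \<inter> closure (rel_interior (iota ` t)) = {}) = (Q1 \<inter> rel_interior (iota ` t) = {})"
    by (rule open_Int_closure_eq_empty[OF Q1(1)])
  ultimately have "Q1 \<inter> rel_interior (iota ` t) \<noteq> {}" by (simp only:) simp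
  then obtain g where g: "g \<in> Q1" "g \<in> rel_interior (iota ` t)" by blast
  then have "g \<in> iota ` t \<inter> Q1" using rel_interior_subset by blast
  then have "g \<in> iota ` (t \<inter> Q)" unfolding Q1(2) .
  then obtain xp where "xp \<in> t \<inter> Q" "g = iota xp" by (rule imageE) simp
  then show ?thesis using that g(2) by blast
qed


lemma pos_weight:
  assumes EC: "eucl_complex iota P" and V: "open V" and pw: "pw_affine_on iota P V f"
    and mk: "minkowski iota P V k c" and cpos: "\<forall>\<sigma>\<in>restr iota P V k. c \<sigma> \<ge> 0"
    and lsc: "\<forall>x\<in>V. \<exists>W. open W \<and> x \<in> W \<and> strongly_concave iota H W f"
    and rng: "range iota \<subseteq> H"
  shows "positive_weight iota P V (k - 1) (mult_weight iota P V k f c)"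
  unfolding positive_weight_def
proof
  fix \<tau> assume \<tau>: "\<tau> \<in> restr iota P V (k - 1)"
  note T = restrD[OF \<tau>]
  define Sg where "Sg = {\<sigma> \<in> restr iota P V k. is_face iota \<tau> \<sigma>}"
  define L where "L = (\<lambda>\<sigma>. lin_part iota V f \<sigma>)"
  define n where "n = (\<lambda>\<sigma>. normal_vec iota \<sigma> \<tau>)"
  obtain x where x: "x \<in> \<tau>" "x \<in> V" using T(2) by blast
  have finS: "finite Sg"
    by (rule finite_subset[OF _ EC_star_finite[OF EC x(1)]]) (auto simp: Sg_def restr_def is_face_def)
  have mw: "mult_weight iota P V k f c \<tau> = - (\<Sum>\<sigma>\<in>Sg. c \<sigma> * L \<sigma> (n \<sigma>))"
    by (simp add: mult_weight_def Sg_def L_def n_def)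
  have cS: "c \<sigma> \<ge> 0" if "\<sigma> \<in> Sg" for \<sigma> using that cpos by (auto simp: Sg_def)
  have sumn: "(\<Sum>\<sigma>\<in>Sg. c \<sigma> *\<^sub>R n \<sigma>) = 0"
    using mk \<tau> unfolding minkowski_def Sg_def n_def by simp
  have "(\<Sum>\<sigma>\<in>Sg. c \<sigma> * L \<sigma> (n \<sigma>)) \<le> 0"
  proof (cases "sum c Sg = 0")
    case True
    then have "\<forall>\<sigma>\<in>Sg. c \<sigma> = 0" using sum_nonneg_eq_0_iff[OF finS] cS by blast
    then show ?thesis by simp
  next
    case False
    define C where "C = sum c Sg"
    have C0: "C > 0" using False sum_nonneg[of Sg c] cS by (simp add: C_def less_le)
    obtain W where W: "open W" "x \<in> W" "strongly_concave iota H W f" using lsc x(2) by blast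
    obtain f' :: "'b \<Rightarrow> ereal" where f': "convex {(y, z::real). y \<in> H \<and> ereal z \<le> f' y}"
      "\<forall>x\<in>W. ereal (f x) = f' (iota x)"
      using W(3) unfolding strongly_concave_def by blast
    define Q where "Q = W \<inter> V"
    have Q: "open Q" using W(1) V by (simp add: Q_def open_Int)
    have "\<tau> \<inter> Q \<noteq> {}" using x W(2) by (auto simp: Q_def)
    then obtain xp where xp: "xp \<in> \<tau>" "xp \<in> Q" "iota xp \<in> rel_interior (iota ` \<tau>)"
      using relint_point[OF EC T(1) Q] by blast
    define p where "p = iota xp"
    have sdata: "\<sigma> \<in> P \<and> \<sigma> \<inter> V \<noteq> {} \<and> \<tau> \<subseteq> \<sigma> \<and> (iota ` \<tau>) face_of (iota ` \<sigma>) \<and>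
        aff_dim (iota ` \<sigma>) = aff_dim (iota ` \<tau>) + 1" if "\<sigma> \<in> Sg" for \<sigma>
    proof -
      have s: "\<sigma> \<in> restr iota P V k" "is_face iota \<tau> \<sigma>" using that by (auto simp: Sg_def)
      note S = restrD[OF s(1)]
      show ?thesis using S is_faceD[OF s(2)] T(3) by simp
    qed
    have ex: "\<forall>\<sigma>\<in>Sg. \<exists>d>0. \<forall>t. 0 \<le> t \<and> t \<le> d \<longrightarrow> p + t *\<^sub>R n \<sigma> \<in> iota ` (\<sigma> \<inter> Q)"
    proof
      fix \<sigma> assume "\<sigma> \<in> Sg"
      then have sd: "\<sigma> \<in> P" "\<sigma> \<inter> V \<noteq> {}" "\<tau> \<subseteq> \<sigma>" "(iota ` \<tau>) face_of (iota ` \<sigma>)"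
        "aff_dim (iota ` \<sigma>) = aff_dim (iota ` \<tau>) + 1" using sdata by blast+
      have tne: "iota ` \<tau> \<noteq> {}" using xp(1) by blast
      obtain \<delta> where \<delta>: "\<delta> > 0" "\<forall>t. 0 \<le> t \<and> t \<le> \<delta> \<longrightarrow> p + t *\<^sub>R gnormal (iota ` \<sigma>) (iota ` \<tau>) \<in> iota ` \<sigma>"
        using push_in[OF EC_cell(5)[OF EC sd(1)] sd(4) tne sd(5) xp(3)] by (auto simp: p_def)
      have nn: "norm (n \<sigma>) = 1"
        using gnormal_props(1)[OF EC_cell(5)[OF EC sd(1)] sd(4) tne sd(5)] by (simp add: n_def normal_vec_gnormal)
      obtain Q1 where Q1: "open Q1" "iota ` (\<sigma> \<inter> Q) = iota ` \<sigma> \<inter> Q1" using cell_open_image[OF EC sd(1) Q] by blast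
      have "xp \<in> \<sigma> \<inter> Q" using xp sd(3) by blast
      then have "p \<in> iota ` (\<sigma> \<inter> Q)" unfolding p_def by (rule imageI)
      then have "p \<in> Q1" unfolding Q1(2) by simp
      then obtain r where r: "r > 0" "ball p r \<subseteq> Q1" using Q1(1) open_contains_ball by blast
      show "\<exists>d>0. \<forall>t. 0 \<le> t \<and> t \<le> d \<longrightarrow> p + t *\<^sub>R n \<sigma> \<in> iota ` (\<sigma> \<inter> Q)"
      proof (intro exI[of _ "min \<delta> (r/2)"] conjI allI impI)
        show "min \<delta> (r/2) > 0" using \<delta>(1) r(1) by simp
        fix t assume t: "0 \<le> t \<and> t \<le> min \<delta> (r / 2)"
        have "p + t *\<^sub>R n \<sigma> \<in> iota ` \<sigma>" using \<delta>(2) t by (simp add: n_def normal_vec_gnormal)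
        moreover have "dist p (p + t *\<^sub>R n \<sigma>) < r" using t nn r(1) by (simp add: dist_norm)
        then have "p + t *\<^sub>R n \<sigma> \<in> Q1" using r(2) by auto
        ultimately have "p + t *\<^sub>R n \<sigma> \<in> iota ` \<sigma> \<inter> Q1" by blast
        then show "p + t *\<^sub>R n \<sigma> \<in> iota ` (\<sigma> \<inter> Q)" unfolding Q1(2) .
      qed
    qed
    obtain \<epsilon> where \<epsilon>: "\<epsilon> > 0" "\<forall>\<sigma>\<in>Sg. \<forall>t. 0 \<le> t \<and> t \<le> \<epsilon> \<longrightarrow> p + t *\<^sub>R n \<sigma> \<in> iota ` (\<sigma> \<inter> Q)"
      using uniform_eps[OF finS ex] by blast
    have "\<forall>\<sigma>\<in>Sg. \<exists>q. q \<in> \<sigma> \<inter> Q \<and> iota q = p + \<epsilon> *\<^sub>R n \<sigma>"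
    proof
      fix \<sigma> assume "\<sigma> \<in> Sg"
      then have "p + \<epsilon> *\<^sub>R n \<sigma> \<in> iota ` (\<sigma> \<inter> Q)" using \<epsilon> by simp
      then show "\<exists>q. q \<in> \<sigma> \<inter> Q \<and> iota q = p + \<epsilon> *\<^sub>R n \<sigma>" by (metis imageE)
    qed
    then obtain qf where qf: "\<And>\<sigma>. \<sigma> \<in> Sg \<Longrightarrow> qf \<sigma> \<in> \<sigma> \<inter> Q \<and> iota (qf \<sigma>) = p + \<epsilon> *\<^sub>R n \<sigma>"
      by metis
    define K where "K = {(y, z::real). y \<in> H \<and> ereal z \<le> f' y}"
    define a where "a = (\<lambda>\<sigma>. c \<sigma> / C)"
    have a1: "(\<Sum>\<sigma>\<in>Sg. a \<sigma>) = 1" using C0 by (simp add: a_def C_def sum_divide_distrib[symmetric])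
    have a0: "\<And>\<sigma>. \<sigma> \<in> Sg \<Longrightarrow> a \<sigma> \<ge> 0" using cS C0 by (simp add: a_def)
    have inK: "(iota (qf \<sigma>), f (qf \<sigma>)) \<in> K" if "\<sigma> \<in> Sg" for \<sigma>
    proof -
      have "qf \<sigma> \<in> W" using qf[OF that] by (auto simp: Q_def)
      then have "ereal (f (qf \<sigma>)) = f' (iota (qf \<sigma>))" using f'(2) by blast
      moreover have "iota (qf \<sigma>) \<in> H" using rng by blast
      ultimately show ?thesis by (simp add: K_def)
    qed
    have "(\<Sum>\<sigma>\<in>Sg. a \<sigma> *\<^sub>R (iota (qf \<sigma>), f (qf \<sigma>))) \<in> K"
      using convex_sum[OF finS _ a1 a0, of K "\<lambda>\<sigma>. (iota (qf \<sigma>), f (qf \<sigma>))"] f'(1) inK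
      by (simp add: K_def)
    moreover have "(\<Sum>\<sigma>\<in>Sg. a \<sigma> *\<^sub>R (iota (qf \<sigma>), f (qf \<sigma>)))
        = (\<Sum>\<sigma>\<in>Sg. a \<sigma> *\<^sub>R iota (qf \<sigma>), \<Sum>\<sigma>\<in>Sg. a \<sigma> * f (qf \<sigma>))"
      by (simp add: prod_eq_iff fst_sum snd_sum)
    moreover have "(\<Sum>\<sigma>\<in>Sg. a \<sigma> *\<^sub>R iota (qf \<sigma>)) = p"
    proof -
      have "(\<Sum>\<sigma>\<in>Sg. a \<sigma> *\<^sub>R iota (qf \<sigma>)) = (\<Sum>\<sigma>\<in>Sg. a \<sigma> *\<^sub>R p + (\<epsilon> / C) *\<^sub>R (c \<sigma> *\<^sub>R n \<sigma>))"
        by (rule sum.cong) (simp_all add: qf a_def scaleR_add_right)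
      also have "\<dots> = (\<Sum>\<sigma>\<in>Sg. a \<sigma>) *\<^sub>R p + (\<epsilon> / C) *\<^sub>R (\<Sum>\<sigma>\<in>Sg. c \<sigma> *\<^sub>R n \<sigma>)"
        by (simp add: sum.distrib scaleR_sum_left scaleR_sum_right)
      also have "\<dots> = p" using a1 sumn by simp
      finally show ?thesis .
    qed
    ultimately have "ereal (\<Sum>\<sigma>\<in>Sg. a \<sigma> * f (qf \<sigma>)) \<le> f' p" by (simp add: K_def)
    moreover have "f' p = ereal (f xp)" using f'(2) xp(2) by (simp add: p_def Q_def)
    ultimately have le: "(\<Sum>\<sigma>\<in>Sg. a \<sigma> * f (qf \<sigma>)) \<le> f xp" by simp
    have fq: "f (qf \<sigma>) = f xp + \<epsilon> * L \<sigma> (n \<sigma>)" if "\<sigma> \<in> Sg" for \<sigma>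
    proof -
      have sd: "\<sigma> \<in> P" "\<sigma> \<inter> V \<noteq> {}" "\<tau> \<subseteq> \<sigma>" using sdata[OF that] by blast+
      note LP = lin_part_props[OF pw sd(1) sd(2), folded L_def]
      have "qf \<sigma> \<in> \<sigma> \<inter> V" using qf[OF that] by (auto simp: Q_def)
      then have "f (qf \<sigma>) = L \<sigma> (p + \<epsilon> *\<^sub>R n \<sigma>)" using LP(2) qf[OF that] by simp
      also have "\<dots> = L \<sigma> p + \<epsilon> * L \<sigma> (n \<sigma>)" using linear_add[OF LP(1)] linear_scale[OF LP(1)] by simp
      also have "L \<sigma> p = f xp" using LP(2)[of xp] xp sd(3) by (auto simp: p_def Q_def)
      finally show ?thesis .
    qed
    have "(\<Sum>\<sigma>\<in>Sg. a \<sigma> * f (qf \<sigma>)) = (\<Sum>\<sigma>\<in>Sg. a \<sigma> * f xp + (\<epsilon> / C) * (c \<sigma> * L \<sigma> (n \<sigma>)))"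
      by (rule sum.cong) (simp_all add: fq a_def algebra_simps)
    also have "\<dots> = f xp + (\<epsilon> / C) * (\<Sum>\<sigma>\<in>Sg. c \<sigma> * L \<sigma> (n \<sigma>))"
      using a1 by (simp add: sum.distrib sum_distrib_left sum_distrib_right[symmetric])
    finally have "(\<epsilon> / C) * (\<Sum>\<sigma>\<in>Sg. c \<sigma> * L \<sigma> (n \<sigma>)) \<le> 0" using le by simp
    moreover have pos: "\<epsilon> / C > 0" using \<epsilon>(1) C0 by simp
    ultimately show ?thesis by (metis mult_zero_right mult_le_cancel_left_pos)
  qed
  then show "0 \<le> mult_weight iota P V k f c \<tau>" using mw by simp
qed


theorem proposition4p8:
  fixes iota :: "'a::second_countable_topology \<Rightarrow> 'n::euclidean_space"
    and H :: "'n set" and P0 :: "'a set set" and U :: "'a set" and f :: "'a \<Rightarrow> real"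
  assumes "eucl_poly_space iota H P0"
    and "open U"
    and "piecewise_affine iota P0 U f"
  shows "(locally_strongly_concave iota H U f \<longrightarrow> concave_pa iota P0 U f) \<and>
         (\<forall>n P b. pure_dim iota P0 n \<and> balancing iota P0 U n P b \<and> concave_pa iota P0 U f
            \<longrightarrow> weakly_concave iota P0 U n P b f)"
proof
  have rng: "range iota \<subseteq> H" using assms(1) by (simp add: eucl_poly_space_def)
  show "locally_strongly_concave iota H U f \<longrightarrow> concave_pa iota P0 U f"
  proof
    assume "locally_strongly_concave iota H U f"
    then obtain UU where UU: "\<forall>W\<in>UU. open W \<and> strongly_concave iota H W f" "\<Union>UU = U"
      unfolding locally_strongly_concave_def by blast
    show "concave_pa iota P0 U f"
      unfolding concave_pa_def
    proof (intro allI impI)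
      fix V k P c
      assume h: "open V \<and> V \<subseteq> U \<and> complex_on iota P0 P \<and> minkowski iota P V (int k) c \<and>
        positive_weight iota P V (int k) c"
      then have V: "open V" and VU: "V \<subseteq> U" and cP: "complex_on iota P0 P"
        and pc: "positive_weight iota P V (int k) c" by blast+
      have EC: "eucl_complex iota P" using complex_on_EC[OF cP] .
      have lscV: "\<forall>x\<in>V. \<exists>W. open W \<and> x \<in> W \<and> strongly_concave iota H W f"
      proof
        fix x assume "x \<in> V"
        then have "x \<in> \<Union>UU" using VU UU(2) by blast
        then obtain W where "W \<in> UU" "x \<in> W" by blast
        then show "\<exists>W. open W \<and> x \<in> W \<and> strongly_concave iota H W f" using UU(1) by blast
      qed
      show "product_positive iota P0 V (int k) f P c"
        unfolding product_positive_def
      proof (intro allI impI)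
        fix P' c'
        assume h': "complex_on iota P0 P' \<and> pw_affine_on iota P' V f \<and> minkowski iota P' V (int k) c' \<and>
          same_cycle iota P0 V (int k) P c P' c'"
        then have cP': "complex_on iota P0 P'" and pw: "pw_affine_on iota P' V f"
          and mk: "minkowski iota P' V (int k) c'" and sc: "same_cycle iota P0 V (int k) P c P' c'" by blast+
        have EC': "eucl_complex iota P'" using complex_on_EC[OF cP'] .
        have cpos: "\<forall>\<sigma>\<in>restr iota P' V (int k). c' \<sigma> \<ge> 0"
          using same_cycle_pos[OF EC EC' V pc sc] by blast
        define w where "w = mult_weight iota P' V (int k) f c'"
        have M: "minkowski iota P' V (int k - 1) w"
          unfolding w_def by (rule mult_minkowski[OF EC' V pw mk])
        have Pos: "positive_weight iota P' V (int k - 1) w"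
          unfolding w_def by (rule pos_weight[OF EC' V pw mk cpos lscV rng])
        have sd: "subdivides P' P'" by (auto simp: subdivides_def)
        have "same_cycle iota P0 V (int k - 1) P' w P' w"
          unfolding same_cycle_def using cP' sd by blast
        then show "positive_cycle iota P0 V (int k - 1) P' (mult_weight iota P' V (int k) f c')"
          unfolding positive_cycle_def w_def[symmetric] using cP' M Pos by blast
      qed
    qed
  qed
  show "\<forall>n P b. pure_dim iota P0 n \<and> balancing iota P0 U n P b \<and> concave_pa iota P0 U f
            \<longrightarrow> weakly_concave iota P0 U n P b f"
  proof (intro allI impI)
    fix n P b
    assume h: "pure_dim iota P0 n \<and> balancing iota P0 U n P b \<and> concave_pa iota P0 U f"
    then have bal: "balancing iota P0 U n P b" and cc: "concave_pa iota P0 U f" by blast+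
    from bal have cP: "complex_on iota P0 P" and mb: "minkowski iota P U (int n) b"
      and bp: "\<forall>s\<in>restr iota P U (int n). b s > 0" unfolding balancing_def by blast+
    have pw: "positive_weight iota P U (int n) b"
      unfolding positive_weight_def using bp by (simp add: less_imp_le)
    have "product_positive iota P0 U (int n) f P b"
      using cc assms(2) cP mb pw unfolding concave_pa_def by blast
    then show "weakly_concave iota P0 U n P b f" by (simp add: weakly_concave_def)
  qed
qed

end
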